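(* Let $\theta\mapsto K_m(\theta)\in\mathbb{C}^{D\times D}$, $m=0,\dots,d-1$, be differentiable Kraus operators with $\sum_mK_m^\dagger K_m=\mathbb{1}$, and suppose the channel $\mathcal{E}(X)=\sum_mK_mXK_m^\dagger$ (at the fixed parameter value $\theta$) is irreducible in the sense that it has a unique fixed point $\rho_{ss}$ and all its other eigenvalues have modulus strictly less than $1$. Let $\langle F_{SE}\rangle(t)=\mathbb{E}_{\psi\sim\text{Haar}}F_{SE}(t;\psi)$ be the Haar-averaged quantum Fisher information of the joint system–emission state $\sum_{\mathbf{m}}K_{m_t}\cdots K_{m_1}|\psi\rangle\otimes|m_1\cdots m_t\rangle$, and let $F_E(t)$ be the quantum Fisher information of the $t$-site emission TI-MPS $|\Phi_t\rangle$ (defined in the context). Then $\langle F_{SE}\rangle(t)$ and $F_E(t)$ have the same asymptotic scaling: $\lim_{t\to\infty}\langle F_{SE}\rangle(t)/t$ and $\lim_{t\to\infty}F_E(t)/t$ exist, are finite, and are equal.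
   Context: $|\Phi_t(\theta)\rangle=\sum_{\mathbf{m}}(\mathbb{1}_A\otimes K_{m_t}(\theta)\cdots K_{m_1}(\theta))|\xi\rangle\otimes|m_1\cdots m_t\rangle$, where $|\xi\rangle\in\mathbb{C}^D_A\otimes\mathbb{C}^D_S$ is a fixed $\theta$-independent purification of $\rho_{ss}$; this is the $t$-site translation-invariant MPS with bond tensor $V=\sum_mK_m\otimes|m\rangle$ and boundary vectors the identity (left) and $\rho_{ss}$ (right). The initial state $\psi$ is $\theta$-independent; pure-state QFI is $4(\langle\dot\Psi|\dot\Psi\rangle-|\langle\dot\Psi|\Psi\rangle|^2)$. *)

theory Defs
  imports "HOL-Analysis.Analysis" "HOL-Probability.Probability"
begin

text \<open>Matrices are D x D complex matrices indexed by a finite type 'n (D = CARD('n));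
  Kraus labels m range over a finite type 'm (d = CARD('m)).\<close>

definition cmat_adj :: "complex^'n^'n \<Rightarrow> complex^'n^'n" where
  "cmat_adj A = (\<chi> i j. cnj (A $ j $ i))"

definition cscale :: "complex \<Rightarrow> complex^'n^'n \<Rightarrow> complex^'n^'n" where
  "cscale c X = (\<chi> i j. c * X $ i $ j)"

definition density_matrix :: "complex^'n^'n \<Rightarrow> bool" where
  "density_matrix \<rho> \<longleftrightarrow> cmat_adj \<rho> = \<rho>
     \<and> (\<forall>v::complex^'n. 0 \<le> Re (\<Sum>i\<in>UNIV. cnj (v $ i) * (\<rho> *v v) $ i))
     \<and> trace \<rho> = 1"

definition kraus_channel ::
  "(real \<Rightarrow> 'm::finite \<Rightarrow> complex^'n^'n) \<Rightarrow> real \<Rightarrow> complex^'n^'n \<Rightarrow> complex^'n^'n" where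
  "kraus_channel K \<theta> X = (\<Sum>m\<in>UNIV. K \<theta> m ** X ** cmat_adj (K \<theta> m))"

definition irreducible_channel ::
  "(complex^'n^'n \<Rightarrow> complex^'n^'n) \<Rightarrow> complex^'n^'n \<Rightarrow> bool" where
  "irreducible_channel E \<rho> \<longleftrightarrow> density_matrix \<rho>
     \<and> (\<forall>X. E X = X \<longleftrightarrow> (\<exists>c. X = cscale c \<rho>))
     \<and> (\<forall>\<mu> X. X \<noteq> 0 \<and> E X = cscale \<mu> X \<and> \<mu> \<noteq> 1 \<longrightarrow> cmod \<mu> < 1)"

text \<open>kprod K theta [m1,...,mt] = K_{mt} ... K_{m1}.\<close>
definition kprod :: "(real \<Rightarrow> 'm \<Rightarrow> complex^'n^'n) \<Rightarrow> real \<Rightarrow> 'm list \<Rightarrow> complex^'n^'n" where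
  "kprod K \<theta> ms = foldl (\<lambda>P m. K \<theta> m ** P) (mat 1) ms"

definition pure_qfi :: "(real \<Rightarrow> 'a \<Rightarrow> complex) \<Rightarrow> 'a set \<Rightarrow> real \<Rightarrow> real" where
  "pure_qfi \<Psi> I \<theta> =
     (let d\<Psi> = (\<lambda>x. vector_derivative (\<lambda>s. \<Psi> s x) (at \<theta>)) in
      4 * (Re (\<Sum>x\<in>I. cnj (d\<Psi> x) * d\<Psi> x) - (cmod (\<Sum>x\<in>I. cnj (d\<Psi> x) * \<Psi> \<theta> x))^2))"

text \<open>Joint system-emission state sum_m K_{mt}...K_{m1}|psi> (x) |m1...mt>,
  component (i, [m1..mt]).\<close>
definition sys_em_state ::
  "(real \<Rightarrow> 'm \<Rightarrow> complex^'n^'n) \<Rightarrow> complex^'n \<Rightarrow> real \<Rightarrow> ('n \<times> 'm list) \<Rightarrow> complex" where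
  "sys_em_state K \<psi> \<theta> = (\<lambda>(i, ms). (kprod K \<theta> ms *v \<psi>) $ i)"

definition F_SE ::
  "(real \<Rightarrow> 'm::finite \<Rightarrow> complex^'n^'n) \<Rightarrow> real \<Rightarrow> nat \<Rightarrow> complex^'n \<Rightarrow> real" where
  "F_SE K \<theta> t \<psi> = pure_qfi (sys_em_state K \<psi>) (UNIV \<times> {ms. length ms = t}) \<theta>"

text \<open>Haar (unitarily invariant) probability measure on unit vectors of C^D, realised as
  the normalisation x / |x| of a uniformly distributed point of the unit ball.\<close>
definition haar_state :: "(complex^'n::finite) measure" where
  "haar_state = distr (uniform_measure lborel (ball 0 1)) borel (\<lambda>x. x /\<^sub>R norm x)"

definition avg_F_SE :: "(real \<Rightarrow> 'm::finite \<Rightarrow> complex^'n::finite^'n) \<Rightarrow> real \<Rightarrow> nat \<Rightarrow> real" where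
  "avg_F_SE K \<theta> t = (\<integral>\<psi>. F_SE K \<theta> t \<psi> \<partial>haar_state)"

text \<open>xi $ a $ i are the coefficients of |xi> = sum xi_{a i} |a>_A |i>_S; it purifies rho
  iff Tr_A |xi><xi| = rho.\<close>
definition purifies :: "complex^'n^'n \<Rightarrow> complex^'n^'n \<Rightarrow> bool" where
  "purifies \<xi> \<rho> \<longleftrightarrow> (\<forall>i j. \<rho> $ i $ j = (\<Sum>a\<in>UNIV. \<xi> $ a $ i * cnj (\<xi> $ a $ j)))"

text \<open>Emission TI-MPS |Phi_t(theta)> = sum_m (1_A (x) K_{mt}..K_{m1}) |xi> (x) |m1..mt>,
  component (a, i, [m1..mt]).\<close>
definition emission_state ::
  "(real \<Rightarrow> 'm \<Rightarrow> complex^'n^'n) \<Rightarrow> complex^'n^'n \<Rightarrow> real \<Rightarrow> ('n \<times> 'n \<times> 'm list) \<Rightarrow> complex" where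
  "emission_state K \<xi> \<theta> = (\<lambda>(a, i, ms). \<Sum>j\<in>UNIV. kprod K \<theta> ms $ i $ j * \<xi> $ a $ j)"

definition F_E ::
  "(real \<Rightarrow> 'm::finite \<Rightarrow> complex^'n::finite^'n) \<Rightarrow> complex^'n^'n \<Rightarrow> real \<Rightarrow> nat \<Rightarrow> real" where
  "F_E K \<xi> \<theta> t = pure_qfi (emission_state K \<xi>) (UNIV \<times> UNIV \<times> {ms. length ms = t}) \<theta>"

end

theory Submission
  imports Defs "Jordan_Normal_Form.Spectral_Radius"
begin

hide_const (open) Matrix.mat Matrix.vec Matrix.row Matrix.col Determinant.det
no_notation Matrix.vec_index (infixl "$" 100)

lemma sum_pairs_reindex:
  fixes g :: "'n::finite \<Rightarrow> 'n \<Rightarrow> 'a::comm_monoid_add"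
  assumes h: "bij_betw h {0..<N} (UNIV :: ('n \<times> 'n) set)"
  shows "(\<Sum>k\<in>UNIV. \<Sum>l\<in>UNIV. g k l) = (\<Sum>q\<in>{0..<N}. g (fst (h q)) (snd (h q)))"
proof -
  have "(\<Sum>k\<in>UNIV. \<Sum>l\<in>UNIV. g k l) = (\<Sum>(k,l)\<in>UNIV \<times> UNIV. g k l)"
    by (rule sum.cartesian_product)
  also have "\<dots> = (\<Sum>x\<in>(UNIV::('n\<times>'n) set). g (fst x) (snd x))"
    by (simp add: case_prod_beta)
  also have "\<dots> = (\<Sum>q\<in>{0..<N}. g (fst (h q)) (snd (h q)))"
    using sum.reindex_bij_betw[OF h, of "\<lambda>x. g (fst x) (snd x)"] by simp
  finally show ?thesis .
qed

lemma decay_bridge: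
  fixes F :: "complex^'n::finite^'n \<Rightarrow> complex^'n^'n" and c :: "'n\<Rightarrow>'n\<Rightarrow>'n\<Rightarrow>'n\<Rightarrow>complex"
  assumes rep: "\<And>X i j. F X $ i $ j = (\<Sum>k\<in>UNIV. \<Sum>l\<in>UNIV. c i j k l * X $ k $ l)"
    and eig: "\<And>\<mu> X. X \<noteq> 0 \<Longrightarrow> F X = cscale \<mu> X \<Longrightarrow> cmod \<mu> < 1"
  shows "\<exists>C s. 0 < s \<and> s < 1 \<and> (\<forall>n X i j. cmod ((F^^n) X $ i $ j) \<le> C * s^n * (\<Sum>k\<in>UNIV. \<Sum>l\<in>UNIV. cmod (X$k$l)))"
proof -
  define N where "N = card (UNIV :: ('n \<times> 'n) set)"
  obtain h where h: "bij_betw h {0..<N} (UNIV :: ('n \<times> 'n) set)"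
    using ex_bij_betw_nat_finite[of "UNIV :: ('n \<times> 'n) set"] unfolding N_def by auto
  have Npos: "N > 0" unfolding N_def by simp
  define A where "A = Matrix.mat N N (\<lambda>(p,q). c (fst(h p)) (snd(h p)) (fst(h q)) (snd (h q)))"
  have Ac: "A \<in> carrier_mat N N" unfolding A_def by simp
  have Aij: "\<And>p q. p < N \<Longrightarrow> q < N \<Longrightarrow> A $$ (p,q) = c (fst(h p)) (snd(h p)) (fst(h q)) (snd (h q))"
    unfolding A_def by simp
  have hsurj: "\<And>i j. \<exists>p<N. h p = (i,j)"
  proof -
    fix i j
    have "(i,j) \<in> h ` {0..<N}" using h unfolding bij_betw_def by simp
    then show "\<exists>p<N. h p = (i,j)" by force
  qed
  have repq: "\<And>X p. p < N \<Longrightarrow> F X $ fst (h p) $ snd (h p) = (\<Sum>q\<in>{0..<N}. A $$ (p,q) * X $ fst (h q) $ snd (h q))"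
    by (simp add: rep sum_pairs_reindex[OF h] Aij)
  have claim1: "\<And>p X. p < N \<Longrightarrow> (F^^n) X $ fst (h p) $ snd (h p) = (\<Sum>q\<in>{0..<N}. (A ^\<^sub>m n) $$ (p,q) * X $ fst (h q) $ snd (h q))" for n
  proof (induction n)
    case 0
    have "(\<Sum>q\<in>{0..<N}. (A ^\<^sub>m 0) $$ (p,q) * X $ fst (h q) $ snd (h q)) = (\<Sum>q\<in>{0..<N}. (if p = q then X $ fst (h q) $ snd (h q) else 0))"
      using 0 Ac by (intro sum.cong) auto
    also have "\<dots> = X $ fst (h p) $ snd (h p)" using 0 by simp
    finally show ?case by simp
  next
    case (Suc n)
    have "(F^^Suc n) X $ fst (h p) $ snd (h p) = (F^^n) (F X) $ fst (h p) $ snd (h p)"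
      by (simp only: funpow.simps(2) comp_apply funpow_swap1)
    also have "\<dots> = (\<Sum>q\<in>{0..<N}. (A ^\<^sub>m n) $$ (p,q) * F X $ fst (h q) $ snd (h q))"
      using Suc by simp
    also have "\<dots> = (\<Sum>q\<in>{0..<N}. (A ^\<^sub>m n) $$ (p,q) * (\<Sum>r\<in>{0..<N}. A $$ (q,r) * X $ fst (h r) $ snd (h r)))"
      by (intro sum.cong refl) (simp add: repq)
    also have "\<dots> = (\<Sum>r\<in>{0..<N}. (\<Sum>q\<in>{0..<N}. (A ^\<^sub>m n) $$ (p,q) * A $$ (q,r)) * X $ fst (h r) $ snd (h r))"
    proof -
      have "(\<Sum>q\<in>{0..<N}. (A ^\<^sub>m n) $$ (p,q) * (\<Sum>r\<in>{0..<N}. A $$ (q,r) * X $ fst (h r) $ snd (h r)))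
          = (\<Sum>q\<in>{0..<N}. \<Sum>r\<in>{0..<N}. (A ^\<^sub>m n) $$ (p,q) * A $$ (q,r) * X $ fst (h r) $ snd (h r))"
        by (simp add: sum_distrib_left mult.assoc)
      also have "\<dots> = (\<Sum>r\<in>{0..<N}. \<Sum>q\<in>{0..<N}. (A ^\<^sub>m n) $$ (p,q) * A $$ (q,r) * X $ fst (h r) $ snd (h r))"
        by (rule sum.swap)
      also have "\<dots> = (\<Sum>r\<in>{0..<N}. (\<Sum>q\<in>{0..<N}. (A ^\<^sub>m n) $$ (p,q) * A $$ (q,r)) * X $ fst (h r) $ snd (h r))"
        by (simp add: sum_distrib_right)
      finally show ?thesis .
    qed
    also have "\<dots> = (\<Sum>r\<in>{0..<N}. (A ^\<^sub>m Suc n) $$ (p,r) * X $ fst (h r) $ snd (h r))"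
    proof (intro sum.cong refl)
      fix r assume r: "r \<in> {0..<N}"
      have "(A ^\<^sub>m Suc n) $$ (p,r) = (\<Sum>q\<in>{0..<N}. (A ^\<^sub>m n) $$ (p,q) * A $$ (q,r))"
        using Suc.prems r Ac by (simp add: scalar_prod_def Matrix.row_def Matrix.col_def)
      then show "(\<Sum>q\<in>{0..<N}. (A ^\<^sub>m n) $$ (p,q) * A $$ (q,r)) * X $ fst (h r) $ snd (h r) = (A ^\<^sub>m Suc n) $$ (p,r) * X $ fst (h r) $ snd (h r)"
        by simp
    qed
    finally show ?case .
  qed

  have claim2: "cmod \<mu> < 1" if ev: "eigenvalue A \<mu>" for \<mu>
  proof -
    obtain v where v: "v \<in> carrier_vec N" "v \<noteq> 0\<^sub>v N" "A *\<^sub>v v = \<mu> \<cdot>\<^sub>v v"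
      using ev Ac unfolding eigenvalue_def eigenvector_def by auto
    define g where "g = the_inv_into {0..<N} h"
    have gh: "\<And>p. p<N \<Longrightarrow> g (h p) = p"
      unfolding g_def using h by (simp add: bij_betw_def the_inv_into_f_f)
    have gb: "bij_betw g UNIV {0..<N}" unfolding g_def by (rule bij_betw_the_inv_into[OF h])
    have hg1: "g x < N" for x using bij_betwE[OF gb] by (cases x) auto
    have hg2: "h (g x) = x" for x unfolding g_def by (rule f_the_inv_into_f_bij_betw[OF h]) simp
    define X :: "complex^'n^'n" where "X = (\<chi> i j. Matrix.vec_index v (g (i,j)))"
    have Xh: "X $ fst (h p) $ snd (h p) = Matrix.vec_index v p" if "p<N" for p
      using gh[OF that] by (simp add: X_def)
    have dv: "dim_vec v = N" using v(1) by simp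
    obtain p where p: "p < N" "Matrix.vec_index v p \<noteq> 0"
    proof (rule ccontr)
      assume "\<not> thesis"
      then have "\<forall>p<N. Matrix.vec_index v p = 0" using that by blast
      then have "v = 0\<^sub>v N" using v(1) by (intro eq_vecI) auto
      with v(2) show False by simp
    qed
    have Xnz: "X \<noteq> 0"
    proof
      assume "X = 0"
      then have "X $ fst (h p) $ snd (h p) = 0" by simp
      with Xh[OF p(1)] p(2) show False by simp
    qed
    have "F X = cscale \<mu> X"
    proof -
      have "F X $ i $ j = \<mu> * X $ i $ j" for i j
      proof -
        define q where "q = g (i,j)"
        have q: "q < N" "h q = (i,j)" using hg1 hg2 q_def by auto
        have "F X $ i $ j = F X $ fst (h q) $ snd (h q)" using q by simp
        also have "\<dots> = (\<Sum>r\<in>{0..<N}. A $$ (q,r) * Matrix.vec_index v r)"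
          unfolding repq[OF q(1)] by (intro sum.cong refl) (simp add: Xh)
        also have "\<dots> = Matrix.vec_index (A *\<^sub>v v) q"
          using q(1) Ac dv by (simp add: scalar_prod_def Matrix.row_def mult.commute)
        also have "\<dots> = \<mu> * Matrix.vec_index v q" using v(3) q(1) dv by simp
        also have "\<dots> = \<mu> * X $ i $ j" using Xh[OF q(1)] q by simp
        finally show ?thesis .
      qed
      then show ?thesis unfolding cscale_def by (simp add: Finite_Cartesian_Product.vec_eq_iff)
    qed
    from eig[OF Xnz this] show ?thesis .
  qed
  define sr where "sr = spectral_radius A"
  have sr_mem: "sr \<in> norm ` spectrum A" and sr_max: "\<And>a. a \<in> norm ` spectrum A \<Longrightarrow> a \<le> sr"
    using spectral_radius_mem_max[OF Ac Npos] unfolding sr_def by auto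
  have sr1: "sr < 1" using sr_mem claim2 unfolding spectrum_def by auto
  have sr0: "0 \<le> sr" using sr_mem by auto
  define s where "s = (1 + sr) / 2"
  have s: "0 < s" "s < 1" "sr < s" using sr0 sr1 unfolding s_def by auto
  define B where "B = (complex_of_real (1/s)) \<cdot>\<^sub>m A"
  have Bc: "B \<in> carrier_mat N N" unfolding B_def using Ac by simp
  have Bij: "\<And>p q. p < N \<Longrightarrow> q < N \<Longrightarrow> A $$ (p,q) = complex_of_real s * B $$ (p,q)"
    using s Ac unfolding B_def by simp
  have evB: "cmod la < 1" if ev: "eigenvalue B la" for la
  proof -
    obtain v where v: "v \<in> carrier_vec N" "v \<noteq> 0\<^sub>v N" "B *\<^sub>v v = la \<cdot>\<^sub>v v"
      using ev Bc unfolding eigenvalue_def eigenvector_def by auto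
    have "A *\<^sub>v v = (complex_of_real s * la) \<cdot>\<^sub>v v"
    proof (rule eq_vecI)
      fix p assume "p < dim_vec ((complex_of_real s * la) \<cdot>\<^sub>v v)"
      then have p: "p < N" using v(1) by simp
      have "Matrix.vec_index (A *\<^sub>v v) p = complex_of_real s * Matrix.vec_index (B *\<^sub>v v) p"
        using p Ac Bc v(1) by (simp add: scalar_prod_def Matrix.row_def Bij sum_distrib_left mult.assoc)
      also have "\<dots> = complex_of_real s * (la * Matrix.vec_index v p)" using v(3) p v(1) by simp
      finally show "Matrix.vec_index (A *\<^sub>v v) p = Matrix.vec_index ((complex_of_real s * la) \<cdot>\<^sub>v v) p"
        using p v(1) by simp
    qed (use Ac v(1) in simp)
    then have "eigenvalue A (complex_of_real s * la)"
      unfolding eigenvalue_def eigenvector_def using v Ac by auto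
    then have "cmod (complex_of_real s * la) \<le> sr" using sr_max unfolding spectrum_def by auto
    then have "s * cmod la \<le> sr" using s by (simp add: norm_mult)
    then have "s * cmod la < s * 1" using s by linarith
    then show ?thesis using s by simp
  qed
  have srB: "spectral_radius B < 1"
    using spectral_radius_mem_max(1)[OF Bc Npos] evB unfolding spectrum_def by auto
  obtain cb where cb: "\<And>k. norm_bound (B ^\<^sub>m k) cb"
    using spectral_radius_jnf_norm_bound_less_1_upper_triangular[OF Bc srB] by auto
  have powA: "(A ^\<^sub>m k) $$ (p,q) = complex_of_real (s^k) * (B ^\<^sub>m k) $$ (p,q)" if "p < N" "q < N" for k p q
    using that
  proof (induction k arbitrary: q)
    case 0
    then show ?case using Ac Bc by simp
  next
    case (Suc k)
    have "(A ^\<^sub>m Suc k) $$ (p,q) = (\<Sum>r\<in>{0..<N}. (A ^\<^sub>m k) $$ (p,r) * A $$ (r,q))"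
      using Suc.prems Ac by (simp add: scalar_prod_def Matrix.row_def Matrix.col_def)
    also have "\<dots> = (\<Sum>r\<in>{0..<N}. complex_of_real (s^Suc k) * ((B ^\<^sub>m k) $$ (p,r) * B $$ (r,q)))"
      using Suc by (intro sum.cong refl) (simp add: Bij)
    also have "\<dots> = complex_of_real (s^Suc k) * (B ^\<^sub>m Suc k) $$ (p,q)"
      using Suc.prems Bc by (simp add: scalar_prod_def Matrix.row_def Matrix.col_def sum_distrib_left)
    finally show ?case .
  qed
  have bndA: "cmod ((A ^\<^sub>m k) $$ (p,q)) \<le> s^k * cb" if "p < N" "q < N" for k p q
  proof -
    have "cmod ((B ^\<^sub>m k) $$ (p,q)) \<le> cb" using cb[of k] that Bc unfolding norm_bound_def by auto
    then have "s^k * cmod ((B ^\<^sub>m k) $$ (p,q)) \<le> s^k * cb" using s by (simp add: mult_left_mono)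
    moreover have "cmod (complex_of_real s ^ k) = s^k" using s by (simp add: norm_power)
    ultimately show ?thesis using powA[OF that, of k] by (simp add: norm_mult)
  qed
  have final: "cmod ((F^^n) X $ i $ j) \<le> (real N * cb) * s^n * (\<Sum>k\<in>UNIV. \<Sum>l\<in>UNIV. cmod (X$k$l))" for n X i j
  proof -
    obtain p where p: "p < N" "h p = (i,j)" using hsurj by blast
    have "cmod ((F^^n) X $ i $ j) = cmod (\<Sum>q\<in>{0..<N}. (A ^\<^sub>m n) $$ (p,q) * X $ fst (h q) $ snd (h q))"
      using claim1[OF p(1)] p(2) by (metis fst_conv snd_conv)
    also have "\<dots> \<le> (\<Sum>q\<in>{0..<N}. s^n * cb * cmod (X $ fst (h q) $ snd (h q)))"
      by (rule order.trans[OF norm_sum sum_mono]) (use bndA p(1) in \<open>auto simp: norm_mult intro!: mult_right_mono\<close>)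
    also have "\<dots> \<le> (\<Sum>q\<in>{0..<N}. s^n * cb * (\<Sum>k\<in>UNIV. \<Sum>l\<in>UNIV. cmod (X$k$l)))"
    proof (rule sum_mono)
      fix q assume "q \<in> {0..<N}"
      have "cmod (X $ fst (h q) $ snd (h q)) \<le> (\<Sum>l\<in>UNIV. cmod (X $ fst (h q) $ l))"
        by (rule member_le_sum) auto
      also have "\<dots> \<le> (\<Sum>k\<in>UNIV. \<Sum>l\<in>UNIV. cmod (X$k$l))"
        by (rule member_le_sum[where f="\<lambda>k. \<Sum>l\<in>UNIV. cmod (X$k$l)"]) (auto intro: sum_nonneg)
      finally have "cmod (X $ fst (h q) $ snd (h q)) \<le> (\<Sum>k\<in>UNIV. \<Sum>l\<in>UNIV. cmod (X$k$l))" .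
      moreover have "0 \<le> s^n * cb"
        using bndA[OF Npos Npos, of n] s by (meson norm_ge_zero order_trans)
      ultimately show "s^n * cb * cmod (X $ fst (h q) $ snd (h q)) \<le> s^n * cb * (\<Sum>k\<in>UNIV. \<Sum>l\<in>UNIV. cmod (X$k$l))"
        by (rule mult_left_mono)
    qed
    also have "\<dots> = (real N * cb) * s^n * (\<Sum>k\<in>UNIV. \<Sum>l\<in>UNIV. cmod (X$k$l))" by simp
    finally show ?thesis .
  qed
  show ?thesis using s final by blast
qed


section \<open>Matrix toolkit\<close>

type_synonym 'n cm = "complex^'n^'n"

lemma mm_radd: "((A::'a::semiring_1^'n^'m) + B) ** C = A ** C + B ** C"
  by (simp add: matrix_matrix_mult_def Finite_Cartesian_Product.vec_eq_iff distrib_right sum.distrib)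
lemma mm_rdiff: "((A::'a::ring_1^'n^'m) - B) ** C = A ** C - B ** C"
  by (simp add: matrix_matrix_mult_def Finite_Cartesian_Product.vec_eq_iff left_diff_distrib sum_subtractf)
lemma mm_ldiff: "(C::'a::ring_1^'n^'m) ** (A - B) = C ** A - C ** B"
  by (simp add: matrix_matrix_mult_def Finite_Cartesian_Product.vec_eq_iff right_diff_distrib sum_subtractf)
lemma mm_lzero[simp]: "(0::'a::semiring_1^'n^'m) ** A = 0"
  by (simp add: matrix_matrix_mult_def Finite_Cartesian_Product.vec_eq_iff)
lemma mm_rzero[simp]: "(A::'a::semiring_1^'n^'m) ** 0 = 0"
  by (simp add: matrix_matrix_mult_def Finite_Cartesian_Product.vec_eq_iff)
lemma mm_sum_left: "(\<Sum>i\<in>S. f i) ** (B::'a::semiring_1^'n^'m) = (\<Sum>i\<in>S. f i ** B)"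
  by (induction S rule: infinite_finite_induct) (auto simp: mm_radd)
lemma mm_sum_right: "(B::'a::semiring_1^'n^'m) ** (\<Sum>i\<in>S. f i) = (\<Sum>i\<in>S. B ** f i)"
  by (induction S rule: infinite_finite_induct) (auto simp: matrix_add_ldistrib)

lemma cscale_mm_left: "cscale c A ** B = cscale c (A ** B)"
  by (simp add: cscale_def matrix_matrix_mult_def Finite_Cartesian_Product.vec_eq_iff sum_distrib_left mult.assoc)
lemma cscale_mm_right: "A ** cscale c B = cscale c (A ** B)"
  by (simp add: cscale_def matrix_matrix_mult_def Finite_Cartesian_Product.vec_eq_iff sum_distrib_left mult.left_commute)
lemma cscale_add: "cscale c (A + B) = cscale c A + cscale c B"
  by (simp add: cscale_def Finite_Cartesian_Product.vec_eq_iff distrib_left)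
lemma cscale_diff: "cscale c (A - B) = cscale c A - cscale c B"
  by (simp add: cscale_def Finite_Cartesian_Product.vec_eq_iff right_diff_distrib)
lemma cscale_add_left: "cscale (c + d) A = cscale c A + cscale d A"
  by (simp add: cscale_def Finite_Cartesian_Product.vec_eq_iff distrib_right)
lemma cscale_diff_left: "cscale (c - d) A = cscale c A - cscale d A"
  by (simp add: cscale_def Finite_Cartesian_Product.vec_eq_iff left_diff_distrib)
lemma cscale_cscale: "cscale c (cscale d A) = cscale (c * d) A"
  by (simp add: cscale_def Finite_Cartesian_Product.vec_eq_iff mult.assoc)
lemma cscale_one[simp]: "cscale 1 A = A"
  by (simp add: cscale_def Finite_Cartesian_Product.vec_eq_iff)
lemma cscale_zero[simp]: "cscale 0 A = 0" "cscale c 0 = 0"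
  by (simp_all add: cscale_def Finite_Cartesian_Product.vec_eq_iff)
lemma cscale_sum: "cscale c (\<Sum>i\<in>S. f i) = (\<Sum>i\<in>S. cscale c (f i))"
  by (induction S rule: infinite_finite_induct) (auto simp: cscale_add)
lemma trace_cscale: "trace (cscale c A) = c * trace A"
  by (simp add: cscale_def trace_def sum_distrib_left)
lemma trace_sum: "trace (\<Sum>i\<in>S. f i) = (\<Sum>i\<in>S. trace (f i :: 'a::comm_semiring_1^'n^'n))"
  by (induction S rule: infinite_finite_induct) (auto simp: trace_add trace_0[simplified])
lemma trace_zero[simp]: "trace (0::'a::comm_semiring_1^'n^'n) = 0"
  using trace_0 by simp

lemma adj_mm: "cmat_adj (A ** B) = cmat_adj B ** cmat_adj A"
  by (simp add: cmat_adj_def matrix_matrix_mult_def Finite_Cartesian_Product.vec_eq_iff mult.commute)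
lemma adj_adj[simp]: "cmat_adj (cmat_adj A) = A"
  by (simp add: cmat_adj_def Finite_Cartesian_Product.vec_eq_iff)
lemma adj_add: "cmat_adj (A + B) = cmat_adj A + cmat_adj B"
  by (simp add: cmat_adj_def Finite_Cartesian_Product.vec_eq_iff)
lemma adj_diff: "cmat_adj (A - B) = cmat_adj A - cmat_adj B"
  by (simp add: cmat_adj_def Finite_Cartesian_Product.vec_eq_iff)
lemma adj_zero[simp]: "cmat_adj 0 = 0"
  by (simp add: cmat_adj_def Finite_Cartesian_Product.vec_eq_iff)
lemma adj_sum: "cmat_adj (\<Sum>i\<in>S. f i) = (\<Sum>i\<in>S. cmat_adj (f i))"
  by (induction S rule: infinite_finite_induct) (auto simp: adj_add)
lemma adj_cscale: "cmat_adj (cscale c A) = cscale (cnj c) (cmat_adj A)"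
  by (simp add: cmat_adj_def cscale_def Finite_Cartesian_Product.vec_eq_iff)
lemma trace_adj: "trace (cmat_adj A) = cnj (trace A)"
  by (simp add: cmat_adj_def trace_def)
lemma adj_mat1[simp]: "cmat_adj (mat 1) = mat 1"
  by (simp add: cmat_adj_def Finite_Cartesian_Product.mat_def Finite_Cartesian_Product.vec_eq_iff)

section \<open>Channels\<close>

definition ch :: "('m::finite \<Rightarrow> complex^'n::finite^'n) \<Rightarrow> ('m \<Rightarrow> complex^'n^'n) \<Rightarrow> complex^'n^'n \<Rightarrow> complex^'n^'n" where
  "ch P Q X = (\<Sum>m\<in>UNIV. P m ** X ** cmat_adj (Q m))"

lemma ch_add: "ch P Q (X + Y) = ch P Q X + ch P Q Y"
  by (simp add: ch_def matrix_add_ldistrib mm_radd sum.distrib)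
lemma ch_diff: "ch P Q (X - Y) = ch P Q X - ch P Q Y"
  by (simp add: ch_def mm_ldiff mm_rdiff sum_subtractf)
lemma ch_zero[simp]: "ch P Q 0 = 0"
  by (simp add: ch_def)
lemma ch_cscale: "ch P Q (cscale c X) = cscale c (ch P Q X)"
  by (simp add: ch_def cscale_mm_left cscale_mm_right cscale_sum)
lemma ch_sum: "ch P Q (\<Sum>i\<in>S. f i) = (\<Sum>i\<in>S. ch P Q (f i))"
  by (induction S rule: infinite_finite_induct) (auto simp: ch_add)
lemma adj_ch: "cmat_adj (ch P Q X) = ch Q P (cmat_adj X)"
  by (simp add: ch_def adj_sum adj_mm matrix_mul_assoc)
lemma ch_gauge_left: "ch (\<lambda>m. P m - cscale c (R m)) Q X = ch P Q X - cscale c (ch R Q X)"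
  by (simp add: ch_def mm_rdiff cscale_mm_left sum_subtractf cscale_sum)

lemma trace_ch: "trace (ch P Q X) = trace (X ** (\<Sum>m\<in>UNIV. cmat_adj (Q m) ** P m))"
proof -
  have "trace (ch P Q X) = (\<Sum>m\<in>UNIV. trace (P m ** X ** cmat_adj (Q m)))"
    by (simp add: ch_def trace_sum)
  also have "\<dots> = (\<Sum>m\<in>UNIV. trace (X ** (cmat_adj (Q m) ** P m)))"
    by (intro sum.cong refl) (metis matrix_mul_assoc trace_mul_sym)
  also have "\<dots> = trace (X ** (\<Sum>m\<in>UNIV. cmat_adj (Q m) ** P m))"
    by (simp add: trace_sum mm_sum_right)
  finally show ?thesis .
qed

lemma sum_len_Suc:
  fixes f :: "'m::finite list \<Rightarrow> 'a::comm_monoid_add"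
  shows "(\<Sum>rs\<in>{rs. length rs = Suc t}. f rs) = (\<Sum>rs\<in>{rs. length rs = t}. \<Sum>m\<in>UNIV. f (m#rs))"
proof -
  have fin: "finite {rs::'m list. length rs = t}" for t
    using finite_lists_length_eq[of "UNIV::'m set" t] by simp
  have img: "{rs::'m list. length rs = Suc t} = (\<lambda>(rs,m). m#rs) ` ({rs. length rs = t} \<times> UNIV)"
    by (auto simp: length_Suc_conv image_iff)
  have inj: "inj_on (\<lambda>(rs,m). m#rs) ({rs::'m list. length rs = t} \<times> UNIV)"
    by (auto simp: inj_on_def)
  have "(\<Sum>rs\<in>{rs. length rs = Suc t}. f rs) = (\<Sum>(rs,m)\<in>{rs. length rs = t} \<times> UNIV. f (m#rs))"
    unfolding img by (subst sum.reindex[OF inj]) (simp add: case_prod_beta)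
  also have "\<dots> = (\<Sum>rs\<in>{rs. length rs = t}. \<Sum>m\<in>UNIV. f (m#rs))"
    by (rule sum.cartesian_product[symmetric])
  finally show ?thesis .
qed

lemma sum_len_0: "(\<Sum>rs\<in>{rs. length rs = 0}. f rs) = f []"
  by simp

primrec prr :: "('m \<Rightarrow> 'a::semiring_1^'n^'n) \<Rightarrow> 'm list \<Rightarrow> 'a^'n^'n" where
  "prr K0 [] = mat 1"
| "prr K0 (m#rs) = K0 m ** prr K0 rs"

primrec dprr :: "('m \<Rightarrow> 'a::semiring_1^'n^'n) \<Rightarrow> ('m \<Rightarrow> 'a^'n^'n) \<Rightarrow> 'm list \<Rightarrow> 'a^'n^'n" where
  "dprr K0 K1 [] = 0"
| "dprr K0 K1 (m#rs) = K1 m ** prr K0 rs + K0 m ** dprr K0 K1 rs"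

lemma kprod_prr: "kprod K \<theta> ms = prr (K \<theta>) (rev ms)"
proof -
  have "foldl (\<lambda>P m. K \<theta> m ** P) A ms = prr (K \<theta>) (rev ms) ** A" for A
    by (induction ms arbitrary: A rule: rev_induct) (auto simp: matrix_mul_assoc)
  then show ?thesis unfolding kprod_def by (metis matrix_mul_rid)
qed

lemma dprr_gauge:
  "dprr K0 (\<lambda>m. K1 m - cscale c (K0 m)) rs = dprr K0 K1 rs - cscale (c * of_nat (length rs)) (prr K0 rs)"
proof (induction rs)
  case Nil
  then show ?case by simp
next
  case (Cons m rs)
  have "dprr K0 (\<lambda>m. K1 m - cscale c (K0 m)) (m#rs)
      = (K1 m - cscale c (K0 m)) ** prr K0 rs + K0 m ** (dprr K0 K1 rs - cscale (c * of_nat (length rs)) (prr K0 rs))"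
    using Cons by simp
  also have "\<dots> = K1 m ** prr K0 rs + K0 m ** dprr K0 K1 rs - cscale (c * of_nat (length (m#rs))) (K0 m ** prr K0 rs)"
    by (simp add: mm_rdiff mm_ldiff cscale_mm_left cscale_mm_right distrib_left cscale_add_left algebra_simps)
  finally show ?case by simp
qed



section \<open>Real bounds\<close>

lemma geo_le: fixes s :: real assumes "0 \<le> s" "s < 1" shows "(\<Sum>k<t. s^k) \<le> 1/(1-s)"
proof -
  have "(\<Sum>k<t. s^k) = (1 - s^t)/(1-s)" using assms by (simp add: sum_gp_strict)
  also have "\<dots> \<le> 1/(1-s)" using assms by (intro divide_right_mono) auto
  finally show ?thesis .
qed

lemma conv_bound:
  fixes g h :: "nat \<Rightarrow> real"
  assumes g: "\<And>n. 0 \<le> g n" and h: "\<And>n. 0 \<le> h n"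
  shows "(\<Sum>k<t. \<Sum>j<k. g (k - Suc j) * h j) \<le> (\<Sum>n<t. g n) * (\<Sum>j<t. h j)"
proof -
  let ?S = "Sigma {..<t} (\<lambda>k. {..<k})"
  let ?phi = "\<lambda>(k,j). (k - Suc j, j)"
  have inj: "inj_on ?phi ?S" by (auto simp: inj_on_def)
  have sub: "?phi ` ?S \<subseteq> {..<t} \<times> {..<t}" by auto
  have "(\<Sum>k<t. \<Sum>j<k. g (k - Suc j) * h j) = (\<Sum>(k,j)\<in>?S. g (k - Suc j) * h j)"
    by (rule sum.Sigma) auto
  also have "\<dots> = (\<Sum>(n,j)\<in>?phi ` ?S. g n * h j)"
    by (subst sum.reindex[OF inj]) (simp add: case_prod_beta)
  also have "\<dots> \<le> (\<Sum>(n,j)\<in>{..<t} \<times> {..<t}. g n * h j)"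
    by (rule sum_mono2) (use sub g h in \<open>auto intro: mult_nonneg_nonneg\<close>)
  also have "\<dots> = (\<Sum>n<t. g n) * (\<Sum>j<t. h j)"
    by (simp add: sum_product sum.cartesian_product)
  finally show ?thesis .
qed

lemma lin_bound:
  fixes f :: "complex^'n::finite^'n \<Rightarrow> 'b::real_normed_vector"
  assumes "\<And>A B. f (A + B) = f A + f B" "\<And>r A. f (r *\<^sub>R A) = r *\<^sub>R f A"
  shows "\<exists>B>0. \<forall>Y. norm (f Y) \<le> B * norm Y"
proof -
  have "linear f" by (rule linearI) (use assms in auto)
  then have "bounded_linear f" by (simp add: linear_conv_bounded_linear)
  then obtain B where "B > 0" "\<And>Y. norm (f Y) \<le> norm Y * B" using bounded_linear.pos_bounded by blast
  then show ?thesis by (metis mult.commute)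
qed

lemma scaleR_cscale: "r *\<^sub>R (Y::complex^'n^'n) = cscale (complex_of_real r) Y"
proof -
  have "(r *\<^sub>R Y) $ i $ j = complex_of_real r * Y $ i $ j" for i j
  proof -
    have "(r *\<^sub>R Y) $ i $ j = r *\<^sub>R (Y $ i $ j)" by simp
    also have "\<dots> = complex_of_real r * Y $ i $ j" by (simp add: scaleR_conv_of_real)
    finally show ?thesis .
  qed
  then show ?thesis by (simp add: cscale_def Finite_Cartesian_Product.vec_eq_iff)
qed

lemma ch_bound: "\<exists>B>0. \<forall>Y. norm (ch P Q Y) \<le> B * norm Y"
  by (rule lin_bound) (simp_all add: ch_add scaleR_cscale ch_cscale)

locale qchan =
  fixes K0 :: "'m::finite \<Rightarrow> complex^'n::finite^'n" and \<rho> :: "complex^'n^'n" and C s :: real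
  assumes tp: "(\<Sum>m\<in>UNIV. cmat_adj (K0 m) ** K0 m) = mat 1"
    and fixp: "ch K0 K0 \<rho> = \<rho>"
    and tr\<rho>: "trace \<rho> = 1"
    and herm\<rho>: "cmat_adj \<rho> = \<rho>"
    and s0: "0 < s" and s1: "s < 1"
    and decay: "\<And>n Y. norm ((ch K0 K0 ^^ n) Y - cscale (trace Y) \<rho>) \<le> C * s^n * norm Y"
begin

abbreviation "E \<equiv> ch K0 K0"

definition Lt :: "nat \<Rightarrow> 'm list set" where "Lt t = {rs. length rs = t}"

definition sS :: "nat \<Rightarrow> 'n cm \<Rightarrow> 'n cm" where
  "sS t X = (\<Sum>rs\<in>Lt t. prr K0 rs ** X ** cmat_adj (prr K0 rs))"
definition nS :: "('m \<Rightarrow> 'n cm) \<Rightarrow> nat \<Rightarrow> 'n cm \<Rightarrow> 'n cm" where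
  "nS K1 t X = (\<Sum>rs\<in>Lt t. dprr K0 K1 rs ** X ** cmat_adj (prr K0 rs))"
definition rS :: "('m \<Rightarrow> 'n cm) \<Rightarrow> nat \<Rightarrow> 'n cm \<Rightarrow> 'n cm" where
  "rS K1 t X = (\<Sum>rs\<in>Lt t. prr K0 rs ** X ** cmat_adj (dprr K0 K1 rs))"
definition mS :: "('m \<Rightarrow> 'n cm) \<Rightarrow> nat \<Rightarrow> 'n cm \<Rightarrow> 'n cm" where
  "mS K1 t X = (\<Sum>rs\<in>Lt t. dprr K0 K1 rs ** X ** cmat_adj (dprr K0 K1 rs))"

definition ell :: "('m \<Rightarrow> 'n cm) \<Rightarrow> ('m \<Rightarrow> 'n cm) \<Rightarrow> 'n cm \<Rightarrow> complex" where
  "ell P Q Y = trace (ch P Q Y)"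

lemma trE: "trace (E Y) = trace Y"
  by (simp add: trace_ch tp)

lemma En_add: "(E^^n) (A + B) = (E^^n) A + (E^^n) B"
  by (induction n) (auto simp: ch_add)
lemma En_diff: "(E^^n) (A - B) = (E^^n) A - (E^^n) B"
  by (induction n) (auto simp: ch_diff)
lemma En_cscale: "(E^^n) (cscale c A) = cscale c ((E^^n) A)"
  by (induction n) (auto simp: ch_cscale)
lemma En_zero[simp]: "(E^^n) 0 = 0"
  by (induction n) auto
lemma En_sum: "(E^^n) (\<Sum>i\<in>S. f i) = (\<Sum>i\<in>S. (E^^n) (f i))"
  by (induction S rule: infinite_finite_induct) (auto simp: En_add)
lemma En_rho: "(E^^n) \<rho> = \<rho>"
  by (induction n) (auto simp: fixp)
lemma trEn: "trace ((E^^n) Y) = trace Y"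
  by (induction n) (auto simp: trE)

lemma Lt_Suc: "(\<Sum>rs\<in>Lt (Suc t). f rs) = (\<Sum>rs\<in>Lt t. \<Sum>m\<in>UNIV. f (m#rs))"
  unfolding Lt_def by (rule sum_len_Suc)
lemma Lt_0: "(\<Sum>rs\<in>Lt 0. f rs) = f []"
  unfolding Lt_def by simp

lemma sS_E: "sS t X = (E^^t) X"
proof (induction t)
  case 0
  then show ?case by (simp add: sS_def Lt_0)
next
  case (Suc t)
  have "sS (Suc t) X = (\<Sum>rs\<in>Lt t. E (prr K0 rs ** X ** cmat_adj (prr K0 rs)))"
    by (simp add: sS_def Lt_Suc ch_def adj_mm matrix_mul_assoc)
  also have "\<dots> = E (sS t X)" by (simp add: sS_def ch_sum)
  finally show ?case using Suc by simp
qed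

lemma nS_rec: "nS K1 (Suc t) X = ch K1 K0 (sS t X) + E (nS K1 t X)"
proof -
  have "nS K1 (Suc t) X = (\<Sum>rs\<in>Lt t. ch K1 K0 (prr K0 rs ** X ** cmat_adj (prr K0 rs))
        + E (dprr K0 K1 rs ** X ** cmat_adj (prr K0 rs)))"
    by (simp add: nS_def Lt_Suc ch_def adj_mm matrix_mul_assoc mm_radd sum.distrib)
  also have "\<dots> = ch K1 K0 (sS t X) + E (nS K1 t X)"
    by (simp add: sS_def nS_def ch_sum sum.distrib)
  finally show ?thesis .
qed

lemma mS_rec: "mS K1 (Suc t) X = ch K1 K1 (sS t X) + ch K1 K0 (rS K1 t X) + ch K0 K1 (nS K1 t X) + E (mS K1 t X)"
proof -
  have "mS K1 (Suc t) X = (\<Sum>rs\<in>Lt t. ch K1 K1 (prr K0 rs ** X ** cmat_adj (prr K0 rs))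
        + ch K1 K0 (prr K0 rs ** X ** cmat_adj (dprr K0 K1 rs))
        + ch K0 K1 (dprr K0 K1 rs ** X ** cmat_adj (prr K0 rs))
        + E (dprr K0 K1 rs ** X ** cmat_adj (dprr K0 K1 rs)))"
    by (simp add: mS_def Lt_Suc ch_def adj_mm adj_add matrix_mul_assoc mm_radd matrix_add_ldistrib sum.distrib add.assoc)
  also have "\<dots> = ch K1 K1 (sS t X) + ch K1 K0 (rS K1 t X) + ch K0 K1 (nS K1 t X) + E (mS K1 t X)"
    by (simp add: sS_def nS_def rS_def mS_def ch_sum sum.distrib)
  finally show ?thesis .
qed

lemma rS_adj: "cmat_adj X = X \<Longrightarrow> rS K1 t X = cmat_adj (nS K1 t X)"
  by (simp add: rS_def nS_def adj_sum adj_mm matrix_mul_assoc)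

lemma ell_adj: "ell P Q (cmat_adj Y) = cnj (ell Q P Y)"
  by (simp add: ell_def adj_ch[symmetric] trace_adj)

lemma tr_nS: "trace (nS K1 t X) = (\<Sum>k<t. ell K1 K0 ((E^^k) X))"
proof (induction t)
  case 0
  then show ?case by (simp add: nS_def Lt_0)
next
  case (Suc t)
  then show ?case by (simp add: nS_rec trace_add trE sS_E ell_def)
qed

lemma Re_tr_mS: assumes "cmat_adj X = X"
  shows "Re (trace (mS K1 t X)) = (\<Sum>k<t. Re (ell K1 K1 ((E^^k) X)) + 2 * Re (ell K0 K1 (nS K1 k X)))"
proof (induction t)
  case 0
  then show ?case by (simp add: mS_def Lt_0)
next
  case (Suc t)
  have "ell K1 K0 (rS K1 t X) = cnj (ell K0 K1 (nS K1 t X))"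
    using rS_adj[OF assms] by (simp add: ell_adj)
  then have "Re (trace (mS K1 (Suc t) X)) = Re (ell K1 K1 ((E^^t) X)) + 2 * Re (ell K0 K1 (nS K1 t X)) + Re (trace (mS K1 t X))"
    by (simp add: mS_rec trace_add trE sS_E ell_def)
  then show ?case using Suc by simp
qed

lemma nS_closed: "nS K1 k X = (\<Sum>j<k. (E^^(k - 1 - j)) (ch K1 K0 ((E^^j) X)))"
proof (induction k)
  case 0
  then show ?case by (simp add: nS_def Lt_0)
next
  case (Suc k)
  have "E (\<Sum>j<k. (E^^(k - 1 - j)) (ch K1 K0 ((E^^j) X))) = (\<Sum>j<k. (E^^(Suc k - 1 - j)) (ch K1 K0 ((E^^j) X)))"
  proof -
    have "E (\<Sum>j<k. (E^^(k - 1 - j)) (ch K1 K0 ((E^^j) X))) = (\<Sum>j<k. E ((E^^(k - 1 - j)) (ch K1 K0 ((E^^j) X))))"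
      by (rule ch_sum)
    also have "\<dots> = (\<Sum>j<k. (E^^(Suc k - 1 - j)) (ch K1 K0 ((E^^j) X)))"
    proof (intro sum.cong refl)
      fix j assume "j \<in> {..<k}"
      then have "Suc k - 1 - j = Suc (k - 1 - j)" by auto
      then show "E ((E^^(k - 1 - j)) (ch K1 K0 ((E^^j) X))) = (E^^(Suc k - 1 - j)) (ch K1 K0 ((E^^j) X))"
        by simp
    qed
    finally show ?thesis .
  qed
  then show ?case using Suc by (simp add: nS_rec sS_E add.commute)
qed

lemma nS_closed': "nS K1 k X = (\<Sum>j<k. (E^^(k - Suc j)) (ch K1 K0 ((E^^j) X)))"
  unfolding nS_closed by (intro sum.cong refl) simp

lemma ell_add: "ell P Q (A + B) = ell P Q A + ell P Q B"
  by (simp add: ell_def ch_add trace_add)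
lemma ell_cscale: "ell P Q (cscale c A) = c * ell P Q A"
  by (simp add: ell_def ch_cscale trace_cscale)
lemma ell_sum: "ell P Q (\<Sum>i\<in>S. f i) = (\<Sum>i\<in>S. ell P Q (f i))"
  by (simp add: ell_def ch_sum trace_sum)
lemma ell_bound: "\<exists>B>0. \<forall>Y. cmod (ell P Q Y) \<le> B * norm Y"
  by (rule lin_bound) (simp_all add: ell_add scaleR_cscale ell_cscale scaleR_conv_of_real)

definition G :: "nat \<Rightarrow> 'n cm \<Rightarrow> 'n cm" where "G n Y = (E^^n) Y - cscale (trace Y) \<rho>"

lemma G_bound: "norm (G n Y) \<le> C * s^n * norm Y"
  unfolding G_def by (rule decay)
lemma En_G: "(E^^n) Y = cscale (trace Y) \<rho> + G n Y"
  by (simp add: G_def)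
lemma G_add: "G n (A + B) = G n A + G n B"
  by (simp add: G_def En_add trace_add cscale_add_left algebra_simps)

lemma C_nonneg: "0 \<le> C"
proof -
  have "\<rho> \<noteq> 0" using tr\<rho> by auto
  then have np: "norm \<rho> > 0" by simp
  have "0 \<le> C * s^0 * norm \<rho>" using decay[of 0 \<rho>] by (meson norm_ge_zero order_trans)
  then show ?thesis using np by (simp add: zero_le_mult_iff)
qed

lemma asym:
  assumes g0: "ell K1 K0 \<rho> = 0"
  shows "\<exists>L R0 R1 R2. \<forall>t X. cmat_adj X = X \<longrightarrow> trace X = 1 \<longrightarrow>
     \<bar>Re (trace (mS K1 t X)) - (cmod (trace (nS K1 t X)))^2 - real t * L\<bar> \<le> R0 + R1 * norm X + R2 * (norm X)^2"
proof -
  obtain B10 where B10: "B10 > 0" "\<And>Y. cmod (ell K1 K0 Y) \<le> B10 * norm Y" using ell_bound by blast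
  obtain B01 where B01: "B01 > 0" "\<And>Y. cmod (ell K0 K1 Y) \<le> B01 * norm Y" using ell_bound by blast
  obtain B11 where B11: "B11 > 0" "\<And>Y. cmod (ell K1 K1 Y) \<le> B11 * norm Y" using ell_bound by blast
  obtain Bc where Bc: "Bc > 0" "\<And>Y. norm (ch K1 K0 Y) \<le> Bc * norm Y" using ch_bound by blast
  have C0: "0 \<le> C" by (rule C_nonneg)
  have s0': "0 \<le> s" using s0 by simp
  have g1: "ell K0 K1 \<rho> = 0"
  proof -
    have "ell K1 K0 (cmat_adj \<rho>) = cnj (ell K0 K1 \<rho>)" by (rule ell_adj)
    then show ?thesis using g0 herm\<rho> by simp
  qed
  define W0 where "W0 = ch K1 K0 \<rho>"
  define a where "a n = ell K0 K1 (G n W0)" for n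
  define M where "M = B01 * C * norm W0"
  have M0: "0 \<le> M" unfolding M_def using B01 C0 by simp
  have a_bound: "cmod (a n) \<le> M * s^n" for n
  proof -
    have "cmod (a n) \<le> B01 * norm (G n W0)" unfolding a_def by (rule B01(2))
    also have "\<dots> \<le> B01 * (C * s^n * norm W0)" using B01(1) G_bound by (intro mult_left_mono) auto
    finally show ?thesis unfolding M_def by (simp add: ac_simps)
  qed
  have sumg: "summable (\<lambda>n. M * s^n)" using s0 s1 by (intro summable_mult summable_geometric) simp
  have sum_a: "summable a"
    by (rule summable_comparison_test'[OF sumg]) (use a_bound in auto)
  define cinf where "cinf = suminf a"
  define e where "e k = (\<Sum>n. a (n + k))" for k
  have ce: "(\<Sum>n<k. a n) = cinf - e k" for k
    using suminf_split_initial_segment[OF sum_a, of k] unfolding cinf_def e_def by simp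
  have e_bound: "cmod (e k) \<le> M / (1-s) * s^k" for k
  proof -
    have sg: "summable (\<lambda>n. M * s^k * s^n)" using s0 s1 by (intro summable_mult summable_geometric) simp
    have ab2: "cmod (a (n + k)) \<le> M * s^k * s^n" for n
      using a_bound[of "n+k"] by (simp add: power_add ac_simps)
    have "cmod (e k) \<le> (\<Sum>n. M * s^k * s^n)"
      unfolding e_def by (rule norm_suminf_le[OF ab2 sg])
    also have "\<dots> = M * s^k * (1 / (1 - s))"
      using s0 s1 by (simp add: suminf_mult suminf_geometric)
    finally show ?thesis by simp
  qed
  define L where "L = Re (ell K1 K1 \<rho>) + 2 * Re cinf"
  define R0 where "R0 = 2 * (M / (1-s) * (1/(1-s)))"
  define R1 where "R1 = B11 * C * (1/(1-s)) + 2 * (B01 * Bc * C^2 * (1/(1-s))^2)"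
  define R2 where "R2 = (B10 * C * (1/(1-s)))^2"
  show ?thesis
  proof (intro exI allI impI)
    fix t :: nat and X :: "complex^'n^'n"
    assume hX: "cmat_adj X = X" and tX: "trace X = 1"
    define nX where "nX = norm X"
    have nX0: "0 \<le> nX" unfolding nX_def by simp
    have EX: "(E^^k) X = \<rho> + G k X" for k using En_G[of k X] tX by simp
    have geo: "(\<Sum>k<t. s^k) \<le> 1/(1-s)" by (rule geo_le[OF s0' s1])
    have GX: "norm (G k X) \<le> C * s^k * nX" for k unfolding nX_def by (rule G_bound)
    have trN: "trace (nS K1 t X) = (\<Sum>k<t. ell K1 K0 (G k X))"
      by (simp add: tr_nS EX ell_add g0)
    have nb: "cmod (trace (nS K1 t X)) \<le> B10 * C * nX * (1/(1-s))"
    proof -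
      have "cmod (trace (nS K1 t X)) \<le> (\<Sum>k<t. cmod (ell K1 K0 (G k X)))"
        unfolding trN by (rule norm_sum)
      also have "\<dots> \<le> (\<Sum>k<t. B10 * C * nX * s^k)"
      proof (rule sum_mono)
        fix k
        have "cmod (ell K1 K0 (G k X)) \<le> B10 * norm (G k X)" by (rule B10(2))
        also have "\<dots> \<le> B10 * (C * s^k * nX)" using B10(1) GX by (intro mult_left_mono) auto
        finally show "cmod (ell K1 K0 (G k X)) \<le> B10 * C * nX * s^k" by (simp add: ac_simps)
      qed
      also have "\<dots> = B10 * C * nX * (\<Sum>k<t. s^k)" by (simp add: sum_distrib_left)
      also have "\<dots> \<le> B10 * C * nX * (1/(1-s))"
        using geo B10(1) C0 nX0 by (intro mult_left_mono) auto
      finally show ?thesis .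
    qed
    have ell01_E: "ell K0 K1 ((E^^n) Z) = ell K0 K1 (G n Z)" for n Z
      by (simp add: En_G ell_add ell_cscale g1)
    define d where "d k = (\<Sum>j<k. ell K0 K1 (G (k - Suc j) (ch K1 K0 (G j X))))" for k
    have nSk: "ell K0 K1 (nS K1 k X) = (\<Sum>n<k. a n) + d k" for k
    proof -
      have "ell K0 K1 (nS K1 k X) = (\<Sum>j<k. ell K0 K1 ((E^^(k - Suc j)) (ch K1 K0 ((E^^j) X))))"
        by (simp add: nS_closed' ell_sum)
      also have "\<dots> = (\<Sum>j<k. a (k - Suc j) + ell K0 K1 (G (k - Suc j) (ch K1 K0 (G j X))))"
        by (intro sum.cong refl) (simp add: ell01_E EX ch_add G_add ell_add a_def W0_def)
      also have "\<dots> = (\<Sum>n<k. a n) + d k"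
        by (simp add: sum.distrib d_def sum.nat_diff_reindex)
      finally show ?thesis .
    qed
    have trM: "Re (trace (mS K1 t X)) = real t * L + (\<Sum>k<t. Re (ell K1 K1 (G k X))) - 2 * Re (\<Sum>k<t. e k) + 2 * Re (\<Sum>k<t. d k)"
    proof -
      have "Re (trace (mS K1 t X)) = (\<Sum>k<t. L + Re (ell K1 K1 (G k X)) - 2 * Re (e k) + 2 * Re (d k))"
        unfolding Re_tr_mS[OF hX] by (intro sum.cong refl) (simp add: EX ell_add nSk ce L_def algebra_simps)
      also have "\<dots> = real t * L + (\<Sum>k<t. Re (ell K1 K1 (G k X))) - 2 * Re (\<Sum>k<t. e k) + 2 * Re (\<Sum>k<t. d k)"
        by (simp add: sum.distrib sum_subtractf sum_distrib_left)
      finally show ?thesis .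
    qed
    have b1: "\<bar>\<Sum>k<t. Re (ell K1 K1 (G k X))\<bar> \<le> B11 * C * (1/(1-s)) * nX"
    proof -
      have "\<bar>\<Sum>k<t. Re (ell K1 K1 (G k X))\<bar> \<le> (\<Sum>k<t. \<bar>Re (ell K1 K1 (G k X))\<bar>)" by (rule sum_abs)
      also have "\<dots> \<le> (\<Sum>k<t. B11 * C * nX * s^k)"
      proof (rule sum_mono)
        fix k
        have "\<bar>Re (ell K1 K1 (G k X))\<bar> \<le> cmod (ell K1 K1 (G k X))" by (rule abs_Re_le_cmod)
        also have "\<dots> \<le> B11 * norm (G k X)" by (rule B11(2))
        also have "\<dots> \<le> B11 * (C * s^k * nX)" using B11(1) GX by (intro mult_left_mono) auto
        finally show "\<bar>Re (ell K1 K1 (G k X))\<bar> \<le> B11 * C * nX * s^k" by (simp add: ac_simps)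
      qed
      also have "\<dots> = B11 * C * nX * (\<Sum>k<t. s^k)" by (simp add: sum_distrib_left)
      also have "\<dots> \<le> B11 * C * nX * (1/(1-s))"
        using geo B11(1) C0 nX0 by (intro mult_left_mono) auto
      finally show ?thesis by (simp add: ac_simps)
    qed
    have b2: "\<bar>Re (\<Sum>k<t. e k)\<bar> \<le> M / (1-s) * (1/(1-s))"
    proof -
      have "\<bar>Re (\<Sum>k<t. e k)\<bar> \<le> cmod (\<Sum>k<t. e k)" by (rule abs_Re_le_cmod)
      also have "\<dots> \<le> (\<Sum>k<t. cmod (e k))" by (rule norm_sum)
      also have "\<dots> \<le> (\<Sum>k<t. M / (1-s) * s^k)" by (rule sum_mono) (rule e_bound)
      also have "\<dots> = M / (1-s) * (\<Sum>k<t. s^k)" by (simp add: sum_distrib_left)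
      also have "\<dots> \<le> M / (1-s) * (1/(1-s))"
        using geo M0 s1 by (intro mult_left_mono) auto
      finally show ?thesis .
    qed
    have b3: "\<bar>Re (\<Sum>k<t. d k)\<bar> \<le> B01 * Bc * C^2 * (1/(1-s))^2 * nX"
    proof -
      have dk: "cmod (d k) \<le> (\<Sum>j<k. (B01 * C * Bc * C * nX) * (s^(k - Suc j) * s^j))" for k
      proof -
        have "cmod (d k) \<le> (\<Sum>j<k. cmod (ell K0 K1 (G (k - Suc j) (ch K1 K0 (G j X)))))"
          unfolding d_def by (rule norm_sum)
        also have "\<dots> \<le> (\<Sum>j<k. (B01 * C * Bc * C * nX) * (s^(k - Suc j) * s^j))"
        proof (rule sum_mono)
          fix j
          have "cmod (ell K0 K1 (G (k - Suc j) (ch K1 K0 (G j X)))) \<le> B01 * norm (G (k - Suc j) (ch K1 K0 (G j X)))"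
            by (rule B01(2))
          also have "\<dots> \<le> B01 * (C * s^(k - Suc j) * norm (ch K1 K0 (G j X)))"
            using B01(1) G_bound by (intro mult_left_mono) auto
          also have "\<dots> \<le> B01 * (C * s^(k - Suc j) * (Bc * norm (G j X)))"
            using B01(1) C0 s0 Bc(2) by (intro mult_left_mono) auto
          also have "\<dots> \<le> B01 * (C * s^(k - Suc j) * (Bc * (C * s^j * nX)))"
            using B01(1) C0 s0 Bc(1) GX by (intro mult_left_mono) auto
          finally show "cmod (ell K0 K1 (G (k - Suc j) (ch K1 K0 (G j X)))) \<le> (B01 * C * Bc * C * nX) * (s^(k - Suc j) * s^j)"
            by (simp add: ac_simps)
        qed
        finally show ?thesis .
      qed
      have "\<bar>Re (\<Sum>k<t. d k)\<bar> \<le> cmod (\<Sum>k<t. d k)" by (rule abs_Re_le_cmod)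
      also have "\<dots> \<le> (\<Sum>k<t. cmod (d k))" by (rule norm_sum)
      also have "\<dots> \<le> (\<Sum>k<t. \<Sum>j<k. (B01 * C * Bc * C * nX) * (s^(k - Suc j) * s^j))"
        by (rule sum_mono) (rule dk)
      also have "\<dots> = (B01 * C * Bc * C * nX) * (\<Sum>k<t. \<Sum>j<k. s^(k - Suc j) * s^j)"
        by (simp add: sum_distrib_left)
      also have "\<dots> \<le> (B01 * C * Bc * C * nX) * ((\<Sum>n<t. s^n) * (\<Sum>j<t. s^j))"
        using B01(1) Bc(1) C0 nX0 s0
        by (intro mult_left_mono conv_bound[where g="\<lambda>n. s^n" and h="\<lambda>n. s^n"]) auto
      also have "\<dots> \<le> (B01 * C * Bc * C * nX) * ((1/(1-s)) * (1/(1-s)))"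
        using B01(1) Bc(1) C0 nX0 s0 s1 geo
        by (intro mult_left_mono mult_mono) (auto intro: sum_nonneg)
      finally show ?thesis by (simp add: power2_eq_square ac_simps)
    qed
    have b4: "(cmod (trace (nS K1 t X)))^2 \<le> R2 * nX^2"
    proof -
      have "(cmod (trace (nS K1 t X)))^2 \<le> (B10 * C * nX * (1/(1-s)))^2"
        using nb by (intro power_mono) auto
      moreover have "(B10 * C * nX * (1/(1-s)))^2 = R2 * nX^2"
        unfolding R2_def by (simp add: power2_eq_square algebra_simps)
      ultimately show ?thesis by simp
    qed
    have "\<bar>Re (trace (mS K1 t X)) - (cmod (trace (nS K1 t X)))^2 - real t * L\<bar>
        \<le> \<bar>\<Sum>k<t. Re (ell K1 K1 (G k X))\<bar> + 2 * \<bar>Re (\<Sum>k<t. e k)\<bar> + 2 * \<bar>Re (\<Sum>k<t. d k)\<bar> + (cmod (trace (nS K1 t X)))^2"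
    proof -
      have abs4: "\<bar>(x::real) - 2*y + 2*z - w\<bar> \<le> \<bar>x\<bar> + 2*\<bar>y\<bar> + 2*\<bar>z\<bar> + w" if "0 \<le> w" for x y z w
        using that by linarith
      have "Re (trace (mS K1 t X)) - (cmod (trace (nS K1 t X)))^2 - real t * L
          = (\<Sum>k<t. Re (ell K1 K1 (G k X))) - 2 * Re (\<Sum>k<t. e k) + 2 * Re (\<Sum>k<t. d k) - (cmod (trace (nS K1 t X)))^2"
        unfolding trM by (simp only: algebra_simps)
      then show ?thesis using abs4[of "(cmod (trace (nS K1 t X)))^2"] by (simp only:) simp
    qed
    also have "\<dots> \<le> R0 + R1 * nX + R2 * nX^2"
    proof -
      have "R0 + R1 * nX + R2 * nX^2 = 2 * (M / (1-s) * (1/(1-s))) + B11 * C * (1/(1-s)) * nX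
          + 2 * (B01 * Bc * C^2 * (1/(1-s))^2 * nX) + R2 * nX^2"
        unfolding R0_def R1_def by (simp add: algebra_simps)
      then show ?thesis using b1 b2 b3 b4 by linarith
    qed
    finally show "\<bar>Re (trace (mS K1 t X)) - (cmod (trace (nS K1 t X)))^2 - real t * L\<bar> \<le> R0 + R1 * norm X + R2 * (norm X)^2"
      unfolding nX_def .
  qed
qed

end



definition outer :: "complex^'n::finite \<Rightarrow> complex^'n \<Rightarrow> complex^'n^'n" where
  "outer v w = (\<chi> i j. v $ i * cnj (w $ j))"

lemma sum_outer:
  fixes M N :: "complex^'n::finite^'n"
  shows "(\<Sum>i\<in>UNIV. cnj ((M *v w) $ i) * (N *v w) $ i) = trace (N ** outer w w ** cmat_adj M)"
proof -
  have e1: "(N ** outer w w) $ i $ k = (N *v w) $ i * cnj (w $ k)" for i k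
    by (simp add: matrix_matrix_mult_def outer_def matrix_vector_mult_def sum_distrib_right mult.assoc)
  have e2: "(N ** outer w w ** cmat_adj M) $ i $ i = cnj ((M *v w) $ i) * (N *v w) $ i" for i
  proof -
    define P where "P = N ** outer w w"
    have "(N ** outer w w ** cmat_adj M) $ i $ i = (\<Sum>k\<in>UNIV. P $ i $ k * cnj (M $ i $ k))"
      unfolding P_def[symmetric] by (simp add: matrix_matrix_mult_def cmat_adj_def)
    also have "\<dots> = (\<Sum>k\<in>UNIV. (N *v w) $ i * (cnj (w $ k) * cnj (M $ i $ k)))"
      unfolding P_def e1 by (simp add: mult.assoc)
    also have "\<dots> = (N *v w) $ i * cnj ((M *v w) $ i)"
      by (simp add: sum_distrib_left matrix_vector_mult_def mult.commute)
    finally show ?thesis by (simp add: mult.commute)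
  qed
  show ?thesis by (simp add: trace_def e2)
qed

lemma outer_herm: "cmat_adj (outer w w) = outer w w"
  by (simp add: cmat_adj_def outer_def Finite_Cartesian_Product.vec_eq_iff)

lemma trace_outer: "trace (outer w w) = complex_of_real ((norm w)^2)"
proof -
  have "trace (outer w w) = (\<Sum>i\<in>UNIV. complex_of_real ((cmod (w $ i))^2))"
    unfolding trace_def by (intro sum.cong refl) (simp add: trace_def outer_def complex_mult_cnj cmod_power2)
  also have "\<dots> = complex_of_real ((norm w)^2)"
  proof -
    have b: "(norm w)^2 = (\<Sum>i\<in>UNIV. (cmod (w $ i))^2)"
      by (simp add: norm_vec_def L2_set_def sum_nonneg)
    show ?thesis by (simp only: b of_real_sum)
  qed
  finally show ?thesis .
qed

lemma bl_entry: "bounded_linear (\<lambda>X::'a::real_normed_vector^'n::finite^'k::finite. X $ i $ j)"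
  using bounded_linear_compose[OF bounded_linear_vec_nth[of j] bounded_linear_vec_nth[of i]] by simp

lemma prr_deriv:
  fixes K :: "real \<Rightarrow> 'm \<Rightarrow> complex^'n::finite^'n"
  assumes d: "\<And>m. ((\<lambda>s. K s m) has_vector_derivative K1 m) (at \<theta>0)"
  shows "((\<lambda>s. prr (K s) rs $ i $ j) has_vector_derivative (dprr (K \<theta>0) K1 rs $ i $ j)) (at \<theta>0)"
proof (induction rs arbitrary: i j)
  case Nil
  then show ?case by (simp add: has_vector_derivative_const)
next
  case (Cons m rs)
  have dK: "((\<lambda>s. K s m $ i $ k) has_vector_derivative K1 m $ i $ k) (at \<theta>0)" for k
    by (rule bounded_linear.has_vector_derivative[OF bl_entry d])
  have "((\<lambda>s. \<Sum>k\<in>UNIV. K s m $ i $ k * prr (K s) rs $ k $ j) has_vector_derivative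
      (\<Sum>k\<in>UNIV. K \<theta>0 m $ i $ k * dprr (K \<theta>0) K1 rs $ k $ j + K1 m $ i $ k * prr (K \<theta>0) rs $ k $ j)) (at \<theta>0)"
  proof (intro has_vector_derivative_sum)
    fix k
    show "((\<lambda>s. K s m $ i $ k * prr (K s) rs $ k $ j) has_vector_derivative
      (K \<theta>0 m $ i $ k * dprr (K \<theta>0) K1 rs $ k $ j + K1 m $ i $ k * prr (K \<theta>0) rs $ k $ j)) (at \<theta>0)"
      using has_vector_derivative_mult[of "\<lambda>s. K s m $ i $ k" "K1 m $ i $ k" \<theta>0 UNIV "\<lambda>s. prr (K s) rs $ k $ j" "dprr (K \<theta>0) K1 rs $ k $ j"] dK Cons.IH
      by simp
  qed
  moreover have "(\<Sum>k\<in>UNIV. K \<theta>0 m $ i $ k * dprr (K \<theta>0) K1 rs $ k $ j + K1 m $ i $ k * prr (K \<theta>0) rs $ k $ j)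
      = dprr (K \<theta>0) K1 (m#rs) $ i $ j"
    by (simp add: matrix_matrix_mult_def sum.distrib add.commute)
  ultimately show ?case by (simp add: matrix_matrix_mult_def)
qed

lemma kprod_vec_deriv:
  fixes K :: "real \<Rightarrow> 'm \<Rightarrow> complex^'n::finite^'n"
  assumes d: "\<And>m. ((\<lambda>s. K s m) has_vector_derivative K1 m) (at \<theta>0)"
  shows "vector_derivative (\<lambda>s. (kprod K s ms *v w) $ i) (at \<theta>0) = (dprr (K \<theta>0) K1 (rev ms) *v w) $ i"
proof -
  have "((\<lambda>s. \<Sum>j\<in>UNIV. prr (K s) (rev ms) $ i $ j * w $ j) has_vector_derivative
      (\<Sum>j\<in>UNIV. dprr (K \<theta>0) K1 (rev ms) $ i $ j * w $ j)) (at \<theta>0)"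
    by (intro has_vector_derivative_sum has_vector_derivative_mult_left prr_deriv[OF d])
  then have "((\<lambda>s. (kprod K s ms *v w) $ i) has_vector_derivative (dprr (K \<theta>0) K1 (rev ms) *v w) $ i) (at \<theta>0)"
    by (simp add: kprod_prr matrix_vector_mult_def)
  then show ?thesis by (rule vector_derivative_at)
qed

lemma sum_rev_len: "(\<Sum>ms\<in>{ms::'m list. length ms = t}. f (rev ms)) = (\<Sum>rs\<in>{rs. length rs = t}. f rs)"
proof -
  have "rev ` {ms::'m list. length ms = t} = {rs. length rs = t}"
    by (auto simp: image_iff intro!: exI[of _ "rev x" for x])
  moreover have "inj_on rev {ms::'m list. length ms = t}" by (simp add: inj_on_def)
  ultimately show ?thesis using sum.reindex[of rev "{ms::'m list. length ms = t}" f] by simp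
qed

lemma F_SE_eq:
  fixes K :: "real \<Rightarrow> 'm::finite \<Rightarrow> complex^'n::finite^'n"
  assumes d: "\<And>m. ((\<lambda>s. K s m) has_vector_derivative K1 m) (at \<theta>0)"
  shows "F_SE K \<theta>0 t \<psi> = 4 * (Re (\<Sum>rs\<in>{rs. length rs = t}. trace (dprr (K \<theta>0) K1 rs ** outer \<psi> \<psi> ** cmat_adj (dprr (K \<theta>0) K1 rs)))
     - (cmod (\<Sum>rs\<in>{rs. length rs = t}. trace (prr (K \<theta>0) rs ** outer \<psi> \<psi> ** cmat_adj (dprr (K \<theta>0) K1 rs))))^2)"
proof -
  let ?L = "{ms::'m list. length ms = t}"
  let ?D = "\<lambda>ms. dprr (K \<theta>0) K1 (rev ms)"
  let ?P = "\<lambda>ms. prr (K \<theta>0) (rev ms)"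
  have dv: "vector_derivative (\<lambda>s. sys_em_state K \<psi> s x) (at \<theta>0) = (?D (snd x) *v \<psi>) $ fst x" for x
    using kprod_vec_deriv[OF d, where ms="snd x" and w=\<psi> and i="fst x"] by (simp add: sys_em_state_def case_prod_beta)
  have s1: "(\<Sum>x\<in>UNIV \<times> ?L. cnj ((?D (snd x) *v \<psi>) $ fst x) * (?D (snd x) *v \<psi>) $ fst x)
      = (\<Sum>rs\<in>{rs. length rs = t}. trace (dprr (K \<theta>0) K1 rs ** outer \<psi> \<psi> ** cmat_adj (dprr (K \<theta>0) K1 rs)))"
  proof -
    have "(\<Sum>x\<in>UNIV \<times> ?L. cnj ((?D (snd x) *v \<psi>) $ fst x) * (?D (snd x) *v \<psi>) $ fst x)
        = (\<Sum>i\<in>UNIV. \<Sum>ms\<in>?L. cnj ((?D ms *v \<psi>) $ i) * (?D ms *v \<psi>) $ i)"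
      by (simp add: sum.cartesian_product case_prod_beta)
    also have "\<dots> = (\<Sum>ms\<in>?L. \<Sum>i\<in>UNIV. cnj ((?D ms *v \<psi>) $ i) * (?D ms *v \<psi>) $ i)"
      by (rule sum.swap)
    also have "\<dots> = (\<Sum>ms\<in>?L. trace (?D ms ** outer \<psi> \<psi> ** cmat_adj (?D ms)))"
      by (simp add: sum_outer)
    also have "\<dots> = (\<Sum>rs\<in>{rs. length rs = t}. trace (dprr (K \<theta>0) K1 rs ** outer \<psi> \<psi> ** cmat_adj (dprr (K \<theta>0) K1 rs)))"
      by (rule sum_rev_len)
    finally show ?thesis .
  qed
  have s2: "(\<Sum>x\<in>UNIV \<times> ?L. cnj ((?D (snd x) *v \<psi>) $ fst x) * sys_em_state K \<psi> \<theta>0 x)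
      = (\<Sum>rs\<in>{rs. length rs = t}. trace (prr (K \<theta>0) rs ** outer \<psi> \<psi> ** cmat_adj (dprr (K \<theta>0) K1 rs)))"
  proof -
    have "(\<Sum>x\<in>UNIV \<times> ?L. cnj ((?D (snd x) *v \<psi>) $ fst x) * sys_em_state K \<psi> \<theta>0 x)
        = (\<Sum>i\<in>UNIV. \<Sum>ms\<in>?L. cnj ((?D ms *v \<psi>) $ i) * (?P ms *v \<psi>) $ i)"
      by (simp add: sum.cartesian_product case_prod_beta sys_em_state_def kprod_prr)
    also have "\<dots> = (\<Sum>ms\<in>?L. \<Sum>i\<in>UNIV. cnj ((?D ms *v \<psi>) $ i) * (?P ms *v \<psi>) $ i)"
      by (rule sum.swap)
    also have "\<dots> = (\<Sum>ms\<in>?L. trace (?P ms ** outer \<psi> \<psi> ** cmat_adj (?D ms)))"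
      by (simp add: sum_outer)
    also have "\<dots> = (\<Sum>rs\<in>{rs. length rs = t}. trace (prr (K \<theta>0) rs ** outer \<psi> \<psi> ** cmat_adj (dprr (K \<theta>0) K1 rs)))"
      by (rule sum_rev_len)
    finally show ?thesis .
  qed
  show ?thesis
    unfolding F_SE_def pure_qfi_def Let_def dv using s1 s2 by simp
qed

lemma F_E_eq:
  fixes K :: "real \<Rightarrow> 'm::finite \<Rightarrow> complex^'n::finite^'n"
  assumes d: "\<And>m. ((\<lambda>s. K s m) has_vector_derivative K1 m) (at \<theta>0)"
    and pur: "purifies \<xi> \<rho>"
  shows "F_E K \<xi> \<theta>0 t = 4 * (Re (\<Sum>rs\<in>{rs. length rs = t}. trace (dprr (K \<theta>0) K1 rs ** \<rho> ** cmat_adj (dprr (K \<theta>0) K1 rs)))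
     - (cmod (\<Sum>rs\<in>{rs. length rs = t}. trace (prr (K \<theta>0) rs ** \<rho> ** cmat_adj (dprr (K \<theta>0) K1 rs))))^2)"
proof -
  let ?L = "{ms::'m list. length ms = t}"
  let ?D = "\<lambda>ms. dprr (K \<theta>0) K1 (rev ms)"
  let ?P = "\<lambda>ms. prr (K \<theta>0) (rev ms)"
  have rho: "\<rho> = (\<Sum>a\<in>UNIV. outer (\<xi> $ a) (\<xi> $ a))"
    using pur unfolding purifies_def
    by (simp add: Finite_Cartesian_Product.vec_eq_iff outer_def sum_component)
  have es: "emission_state K \<xi> s x = (kprod K s (snd (snd x)) *v (\<xi> $ fst x)) $ fst (snd x)" for s x
    by (simp add: emission_state_def matrix_vector_mult_def case_prod_beta)
  have dv: "vector_derivative (\<lambda>s. emission_state K \<xi> s x) (at \<theta>0) = (?D (snd (snd x)) *v (\<xi> $ fst x)) $ fst (snd x)" for x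
    unfolding es by (rule kprod_vec_deriv[OF d])
  have gen: "(\<Sum>x\<in>UNIV \<times> UNIV \<times> ?L. cnj ((M (snd (snd x)) *v (\<xi> $ fst x)) $ fst (snd x)) * (N (snd (snd x)) *v (\<xi> $ fst x)) $ fst (snd x))
      = (\<Sum>ms\<in>?L. trace (N ms ** \<rho> ** cmat_adj (M ms)))" for M N :: "'m list \<Rightarrow> complex^'n^'n"
  proof -
    have "(\<Sum>x\<in>UNIV \<times> UNIV \<times> ?L. cnj ((M (snd (snd x)) *v (\<xi> $ fst x)) $ fst (snd x)) * (N (snd (snd x)) *v (\<xi> $ fst x)) $ fst (snd x))
        = (\<Sum>a\<in>UNIV. \<Sum>i\<in>UNIV. \<Sum>ms\<in>?L. cnj ((M ms *v (\<xi> $ a)) $ i) * (N ms *v (\<xi> $ a)) $ i)"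
      by (simp add: sum.cartesian_product case_prod_beta)
    also have "\<dots> = (\<Sum>a\<in>UNIV. \<Sum>ms\<in>?L. \<Sum>i\<in>UNIV. cnj ((M ms *v (\<xi> $ a)) $ i) * (N ms *v (\<xi> $ a)) $ i)"
      by (intro sum.cong refl sum.swap)
    also have "\<dots> = (\<Sum>ms\<in>?L. \<Sum>a\<in>UNIV. \<Sum>i\<in>UNIV. cnj ((M ms *v (\<xi> $ a)) $ i) * (N ms *v (\<xi> $ a)) $ i)"
      by (rule sum.swap)
    also have "\<dots> = (\<Sum>ms\<in>?L. \<Sum>a\<in>UNIV. trace (N ms ** outer (\<xi> $ a) (\<xi> $ a) ** cmat_adj (M ms)))"
      by (simp add: sum_outer)
    also have "\<dots> = (\<Sum>ms\<in>?L. trace (N ms ** \<rho> ** cmat_adj (M ms)))"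
      by (simp add: rho trace_sum mm_sum_left mm_sum_right)
    finally show ?thesis .
  qed
  have s1: "(\<Sum>x\<in>UNIV \<times> UNIV \<times> ?L. cnj (vector_derivative (\<lambda>s. emission_state K \<xi> s x) (at \<theta>0)) * vector_derivative (\<lambda>s. emission_state K \<xi> s x) (at \<theta>0))
     = (\<Sum>rs\<in>{rs. length rs = t}. trace (dprr (K \<theta>0) K1 rs ** \<rho> ** cmat_adj (dprr (K \<theta>0) K1 rs)))"
  proof -
    have "(\<Sum>x\<in>UNIV \<times> UNIV \<times> ?L. cnj (vector_derivative (\<lambda>s. emission_state K \<xi> s x) (at \<theta>0)) * vector_derivative (\<lambda>s. emission_state K \<xi> s x) (at \<theta>0))
      = (\<Sum>ms\<in>?L. trace (?D ms ** \<rho> ** cmat_adj (?D ms)))"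
      unfolding dv by (rule gen)
    also have "\<dots> = (\<Sum>rs\<in>{rs. length rs = t}. trace (dprr (K \<theta>0) K1 rs ** \<rho> ** cmat_adj (dprr (K \<theta>0) K1 rs)))"
      by (rule sum_rev_len)
    finally show ?thesis .
  qed
  have s2: "(\<Sum>x\<in>UNIV \<times> UNIV \<times> ?L. cnj (vector_derivative (\<lambda>s. emission_state K \<xi> s x) (at \<theta>0)) * emission_state K \<xi> \<theta>0 x)
     = (\<Sum>rs\<in>{rs. length rs = t}. trace (prr (K \<theta>0) rs ** \<rho> ** cmat_adj (dprr (K \<theta>0) K1 rs)))"
  proof -
    have "(\<Sum>x\<in>UNIV \<times> UNIV \<times> ?L. cnj (vector_derivative (\<lambda>s. emission_state K \<xi> s x) (at \<theta>0)) * emission_state K \<xi> \<theta>0 x)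
      = (\<Sum>x\<in>UNIV \<times> UNIV \<times> ?L. cnj ((?D (snd (snd x)) *v (\<xi> $ fst x)) $ fst (snd x)) * (?P (snd (snd x)) *v (\<xi> $ fst x)) $ fst (snd x))"
      unfolding dv unfolding es by (simp add: kprod_prr)
    also have "\<dots> = (\<Sum>ms\<in>?L. trace (?P ms ** \<rho> ** cmat_adj (?D ms)))" by (rule gen)
    also have "\<dots> = (\<Sum>rs\<in>{rs. length rs = t}. trace (prr (K \<theta>0) rs ** \<rho> ** cmat_adj (dprr (K \<theta>0) K1 rs)))"
      by (rule sum_rev_len)
    finally show ?thesis .
  qed
  show ?thesis
    unfolding F_E_def pure_qfi_def Let_def using s1 s2 by simp
qed

context qchan
begin

definition fq :: "('m \<Rightarrow> 'n cm) \<Rightarrow> nat \<Rightarrow> 'n cm \<Rightarrow> real" where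
  "fq K1 t X = Re (trace (mS K1 t X)) - (cmod (trace (nS K1 t X)))^2"

lemma fq_alt: assumes "cmat_adj X = X"
  shows "fq K1 t X = Re (trace (mS K1 t X)) - (cmod (trace (rS K1 t X)))^2"
  using rS_adj[OF assms] by (simp add: fq_def trace_adj)

lemma trace_sS: "trace (sS t X) = trace X"
  by (simp add: sS_E trEn)

lemma fq_gauge:
  assumes hX: "cmat_adj X = X" and tX: "trace X = 1"
  shows "fq (\<lambda>m. K1 m - cscale c (K0 m)) t X = fq K1 t X"
proof -
  define c' where "c' = c * of_nat t"
  have D': "dprr K0 (\<lambda>m. K1 m - cscale c (K0 m)) rs = dprr K0 K1 rs - cscale c' (prr K0 rs)" if "rs \<in> Lt t" for rs
    using that by (simp add: dprr_gauge c'_def Lt_def)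
  have nS': "nS (\<lambda>m. K1 m - cscale c (K0 m)) t X = nS K1 t X - cscale c' (sS t X)"
    by (simp add: nS_def sS_def D' mm_rdiff cscale_mm_left sum_subtractf cscale_sum cong: sum.cong)
  have mS': "mS (\<lambda>m. K1 m - cscale c (K0 m)) t X
      = mS K1 t X - cscale (cnj c') (nS K1 t X) - cscale c' (rS K1 t X) + cscale (c' * cnj c') (sS t X)"
  proof -
    have "mS (\<lambda>m. K1 m - cscale c (K0 m)) t X = (\<Sum>rs\<in>Lt t. (dprr K0 K1 rs - cscale c' (prr K0 rs)) ** X ** cmat_adj (dprr K0 K1 rs - cscale c' (prr K0 rs)))"
      by (simp add: mS_def D' cong: sum.cong)
    also have "\<dots> = (\<Sum>rs\<in>Lt t. dprr K0 K1 rs ** X ** cmat_adj (dprr K0 K1 rs)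
        - cscale (cnj c') (dprr K0 K1 rs ** X ** cmat_adj (prr K0 rs))
        - cscale c' (prr K0 rs ** X ** cmat_adj (dprr K0 K1 rs))
        + cscale (c' * cnj c') (prr K0 rs ** X ** cmat_adj (prr K0 rs)))"
      by (intro sum.cong refl)
        (simp add: adj_diff adj_cscale mm_rdiff mm_ldiff cscale_mm_left cscale_mm_right cscale_cscale cscale_diff algebra_simps)
    also have "\<dots> = mS K1 t X - cscale (cnj c') (nS K1 t X) - cscale c' (rS K1 t X) + cscale (c' * cnj c') (sS t X)"
      by (simp add: mS_def nS_def rS_def sS_def sum.distrib sum_subtractf cscale_sum)
    finally show ?thesis .
  qed
  define n where "n = trace (nS K1 t X)"
  have rS_n: "trace (rS K1 t X) = cnj n" unfolding n_def using rS_adj[OF hX] by (simp add: trace_adj)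
  have sS1: "trace (sS t X) = 1" using tX trace_sS by simp
  have trm: "trace (mS (\<lambda>m. K1 m - cscale c (K0 m)) t X) = trace (mS K1 t X) - cnj c' * n - c' * cnj n + c' * cnj c'"
    by (simp add: mS' trace_add trace_sub trace_cscale rS_n sS1 n_def)
  have trn: "trace (nS (\<lambda>m. K1 m - cscale c (K0 m)) t X) = n - c'"
    by (simp add: nS' trace_sub trace_cscale sS1 n_def)
  show ?thesis
    unfolding fq_def trm trn n_def[symmetric]
    by (simp add: cmod_power2) (simp add: power2_eq_square algebra_simps)
qed

lemma fq_asym:
  "\<exists>L R0 R1 R2. \<forall>t X. cmat_adj X = X \<longrightarrow> trace X = 1 \<longrightarrow>
     \<bar>fq K1 t X - real t * L\<bar> \<le> R0 + R1 * norm X + R2 * (norm X)^2"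
proof -
  define \<gamma> where "\<gamma> = ell K1 K0 \<rho>"
  define K1' where "K1' = (\<lambda>m. K1 m - cscale \<gamma> (K0 m))"
  have "ell K1' K0 \<rho> = 0"
    unfolding K1'_def ell_def by (simp add: ch_gauge_left trace_sub trace_cscale fixp tr\<rho> \<gamma>_def ell_def)
  from asym[OF this] obtain L R0 R1 R2 where H: "\<forall>t X. cmat_adj X = X \<longrightarrow> trace X = 1 \<longrightarrow>
     \<bar>Re (trace (mS K1' t X)) - (cmod (trace (nS K1' t X)))^2 - real t * L\<bar> \<le> R0 + R1 * norm X + R2 * (norm X)^2"
    by blast
  show ?thesis
  proof (intro exI allI impI)
    fix t :: nat and X :: "complex^'n^'n"
    assume hX: "cmat_adj X = X" and tX: "trace X = 1"
    have "fq K1 t X = fq K1' t X" unfolding K1'_def using fq_gauge[OF hX tX] by simp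
    then show "\<bar>fq K1 t X - real t * L\<bar> \<le> R0 + R1 * norm X + R2 * (norm X)^2"
      using H hX tX unfolding fq_def by simp
  qed
qed

end



lemma lin_limit:
  fixes f :: "nat \<Rightarrow> real"
  assumes "\<And>t. \<bar>f t - real t * L\<bar> \<le> B"
  shows "(\<lambda>t. f t / real t) \<longlonglongrightarrow> L"
proof -
  have "(\<lambda>t. f t / real t - L) \<longlonglongrightarrow> 0"
  proof (rule Lim_null_comparison)
    show "\<forall>\<^sub>F t in sequentially. norm (f t / real t - L) \<le> B / real t"
    proof (rule eventually_sequentiallyI[of 1])
      fix t :: nat assume "1 \<le> t"
      then have tp: "real t > 0" by simp
      have "f t / real t - L = (f t - real t * L) / real t" using tp by (simp add: field_simps)
      then have "norm (f t / real t - L) = \<bar>f t - real t * L\<bar> / real t" using tp by simp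
      also have "\<dots> \<le> B / real t" using assms[of t] tp by (simp add: divide_right_mono)
      finally show "norm (f t / real t - L) \<le> B / real t" .
    qed
    show "(\<lambda>t. B / real t) \<longlonglongrightarrow> 0" by (rule lim_const_over_n)
  qed
  then show ?thesis by (simp add: LIM_zero_iff)
qed

lemma norm_cm_le: "norm (Y::complex^'n::finite^'n) \<le> (\<Sum>i\<in>UNIV. \<Sum>j\<in>UNIV. cmod (Y $ i $ j))"
proof -
  have "norm Y \<le> (\<Sum>i\<in>UNIV. norm (Y $ i))"
    unfolding norm_vec_def by (rule L2_set_le_sum) simp
  also have "\<dots> \<le> (\<Sum>i\<in>UNIV. \<Sum>j\<in>UNIV. cmod (Y $ i $ j))"
  proof (rule sum_mono)
    fix i
    show "norm (Y $ i) \<le> (\<Sum>j\<in>UNIV. cmod (Y $ i $ j))"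
      unfolding norm_vec_def by (rule L2_set_le_sum) simp
  qed
  finally show ?thesis .
qed

lemma entries_le_norm: "(\<Sum>i\<in>UNIV. \<Sum>j\<in>UNIV. cmod ((Y::complex^'n::finite^'n) $ i $ j)) \<le> real (CARD('n))^2 * norm Y"
proof -
  have "(\<Sum>i\<in>UNIV. \<Sum>j\<in>UNIV. cmod (Y $ i $ j)) \<le> (\<Sum>i\<in>(UNIV::'n set). \<Sum>j\<in>(UNIV::'n set). norm Y)"
  proof (intro sum_mono)
    fix i j
    have "cmod (Y $ i $ j) \<le> norm (Y $ i)" by (rule Finite_Cartesian_Product.norm_nth_le)
    also have "\<dots> \<le> norm Y" by (rule Finite_Cartesian_Product.norm_nth_le)
    finally show "cmod (Y $ i $ j) \<le> norm Y" .
  qed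
  also have "\<dots> = real (CARD('n))^2 * norm Y" by (simp add: power2_eq_square)
  finally show ?thesis .
qed

lemma trace_le_norm: "cmod (trace (Y::complex^'n::finite^'n)) \<le> real (CARD('n)) * norm Y"
proof -
  have "cmod (trace Y) \<le> (\<Sum>i\<in>UNIV. cmod (Y $ i $ i))" unfolding trace_def by (rule norm_sum)
  also have "\<dots> \<le> (\<Sum>i\<in>(UNIV::'n set). norm Y)"
  proof (rule sum_mono)
    fix i
    have "cmod (Y $ i $ i) \<le> norm (Y $ i)" by (rule Finite_Cartesian_Product.norm_nth_le)
    also have "\<dots> \<le> norm Y" by (rule Finite_Cartesian_Product.norm_nth_le)
    finally show "cmod (Y $ i $ i) \<le> norm Y" .
  qed
  also have "\<dots> = real (CARD('n)) * norm Y" by simp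
  finally show ?thesis .
qed

lemma ch_entry:
  "ch P Q X $ i $ j = (\<Sum>k\<in>UNIV. \<Sum>l\<in>UNIV. (\<Sum>m\<in>UNIV. P m $ i $ k * cnj (Q m $ j $ l)) * X $ k $ l)"
proof -
  have "ch P Q X $ i $ j = (\<Sum>m\<in>UNIV. \<Sum>l\<in>UNIV. \<Sum>k\<in>UNIV. P m $ i $ k * X $ k $ l * cnj (Q m $ j $ l))"
    by (simp add: ch_def sum_component matrix_matrix_mult_def cmat_adj_def sum_distrib_right)
  also have "\<dots> = (\<Sum>m\<in>UNIV. \<Sum>k\<in>UNIV. \<Sum>l\<in>UNIV. P m $ i $ k * X $ k $ l * cnj (Q m $ j $ l))"
    by (intro sum.cong refl sum.swap)
  also have "\<dots> = (\<Sum>k\<in>UNIV. \<Sum>m\<in>UNIV. \<Sum>l\<in>UNIV. P m $ i $ k * X $ k $ l * cnj (Q m $ j $ l))"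
    by (rule sum.swap)
  also have "\<dots> = (\<Sum>k\<in>UNIV. \<Sum>l\<in>UNIV. \<Sum>m\<in>UNIV. P m $ i $ k * X $ k $ l * cnj (Q m $ j $ l))"
    by (intro sum.cong refl sum.swap)
  also have "\<dots> = (\<Sum>k\<in>UNIV. \<Sum>l\<in>UNIV. (\<Sum>m\<in>UNIV. P m $ i $ k * cnj (Q m $ j $ l)) * X $ k $ l)"
    by (simp add: sum_distrib_right sum_distrib_left ac_simps)
  finally show ?thesis .
qed

lemma cscale_trace_entry:
  "cscale (trace X) \<rho> $ i $ j = (\<Sum>k\<in>UNIV. \<Sum>l\<in>UNIV. (if k = l then \<rho> $ i $ j else 0) * X $ k $ l)"
proof -
  have inner: "(\<Sum>l\<in>UNIV. (if k = l then \<rho> $ i $ j else 0) * X $ k $ l) = \<rho> $ i $ j * X $ k $ k" for k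
  proof -
    have "(\<Sum>l\<in>UNIV. (if k = l then \<rho> $ i $ j else 0) * X $ k $ l) = (\<Sum>l\<in>UNIV. (if k = l then \<rho> $ i $ j * X $ k $ l else 0))"
      by (intro sum.cong refl) simp
    also have "\<dots> = \<rho> $ i $ j * X $ k $ k" by (simp add: sum.delta)
    finally show ?thesis .
  qed
  show ?thesis by (simp only: inner) (simp add: cscale_def trace_def sum_distrib_right sum_distrib_left mult.commute)
qed


lemma norm_cscale: "norm (cscale c (X::complex^'n::finite^'n)) = cmod c * norm X"
proof -
  have r: "norm (cscale c X $ i) = cmod c * norm (X $ i)" for i
  proof -
    have "norm (cscale c X $ i) = L2_set (\<lambda>j. cmod c * cmod (X $ i $ j)) UNIV"
      by (simp add: norm_vec_def cscale_def norm_mult)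
    also have "\<dots> = cmod c * norm (X $ i)"
      by (simp add: norm_vec_def L2_set_right_distrib)
    finally show ?thesis .
  qed
  have "norm (cscale c X) = L2_set (\<lambda>i. cmod c * norm (X $ i)) UNIV"
    unfolding norm_vec_def[of "cscale c X"] r ..
  also have "\<dots> = cmod c * norm X"
    by (simp add: norm_vec_def L2_set_right_distrib)
  finally show ?thesis .
qed

lemma outer_norm_le:
  assumes "norm (\<psi>::complex^'n::finite) = 1"
  shows "norm (outer \<psi> \<psi>) \<le> real (CARD('n))^2"
proof -
  have "norm (outer \<psi> \<psi>) \<le> (\<Sum>i\<in>UNIV. \<Sum>j\<in>UNIV. cmod (outer \<psi> \<psi> $ i $ j))" by (rule norm_cm_le)
  also have "\<dots> \<le> (\<Sum>i\<in>(UNIV::'n set). \<Sum>j\<in>(UNIV::'n set). 1)"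
  proof (intro sum_mono)
    fix i j
    have a: "cmod (\<psi> $ i) \<le> 1" "cmod (\<psi> $ j) \<le> 1"
      using Finite_Cartesian_Product.norm_nth_le[of \<psi>] assms by auto
    have "cmod (outer \<psi> \<psi> $ i $ j) = cmod (\<psi> $ i) * cmod (\<psi> $ j)"
      by (simp add: outer_def norm_mult)
    also have "\<dots> \<le> 1 * 1" using a by (intro mult_mono) auto
    finally show "cmod (outer \<psi> \<psi> $ i $ j) \<le> 1" by simp
  qed
  also have "\<dots> = real (CARD('n))^2" by (simp add: power2_eq_square)
  finally show ?thesis .
qed

lemma outer_cont: "continuous_on UNIV (\<lambda>\<psi>::complex^'n::finite. outer \<psi> \<psi>)"
  unfolding outer_def by (intro continuous_intros)

context qchan
begin

lemma tr_mS_bl: "bounded_linear (\<lambda>X. trace (mS K1 t X))"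
proof -
  have "linear (\<lambda>X. trace (mS K1 t X))"
  proof (rule linearI)
    fix A B :: "complex^'n^'n" and r :: real
    show "trace (mS K1 t (A + B)) = trace (mS K1 t A) + trace (mS K1 t B)"
      by (simp add: mS_def matrix_add_ldistrib mm_radd sum.distrib trace_add)
    show "trace (mS K1 t (r *\<^sub>R A)) = r *\<^sub>R trace (mS K1 t A)"
      by (simp add: mS_def scaleR_cscale cscale_mm_left cscale_mm_right trace_sum trace_cscale
          sum_distrib_left scaleR_conv_of_real)
  qed
  then show ?thesis by (simp add: linear_conv_bounded_linear)
qed

lemma tr_nS_bl: "bounded_linear (\<lambda>X. trace (nS K1 t X))"
proof -
  have "linear (\<lambda>X. trace (nS K1 t X))"
  proof (rule linearI)
    fix A B :: "complex^'n^'n" and r :: real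
    show "trace (nS K1 t (A + B)) = trace (nS K1 t A) + trace (nS K1 t B)"
      by (simp add: nS_def matrix_add_ldistrib mm_radd sum.distrib trace_add)
    show "trace (nS K1 t (r *\<^sub>R A)) = r *\<^sub>R trace (nS K1 t A)"
      by (simp add: nS_def scaleR_cscale cscale_mm_left cscale_mm_right trace_sum trace_cscale
          sum_distrib_left scaleR_conv_of_real)
  qed
  then show ?thesis by (simp add: linear_conv_bounded_linear)
qed

lemma fq_outer_cont: "continuous_on UNIV (\<lambda>\<psi>::complex^'n. fq K1 t (outer \<psi> \<psi>))"
proof -
  have c1: "continuous_on UNIV (\<lambda>\<psi>::complex^'n. trace (mS K1 t (outer \<psi> \<psi>)))"
    by (rule continuous_on_compose2[OF linear_continuous_on[OF tr_mS_bl] outer_cont]) auto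
  have c2: "continuous_on UNIV (\<lambda>\<psi>::complex^'n. trace (nS K1 t (outer \<psi> \<psi>)))"
    by (rule continuous_on_compose2[OF linear_continuous_on[OF tr_nS_bl] outer_cont]) auto
  show ?thesis unfolding fq_def by (intro continuous_intros c1 c2)
qed

end


theorem corollary1:
  fixes K :: "real \<Rightarrow> 'm::finite \<Rightarrow> complex^'n::finite^'n"
    and \<theta>0 :: real
    and \<rho>ss \<xi> :: "complex^'n^'n"
  assumes diff: "\<And>m \<theta>. (\<lambda>s. K s m) differentiable (at \<theta>)"
    and tp: "\<And>\<theta>. (\<Sum>m\<in>UNIV. cmat_adj (K \<theta> m) ** K \<theta> m) = mat 1"
    and irr: "irreducible_channel (kraus_channel K \<theta>0) \<rho>ss"
    and pur: "purifies \<xi> \<rho>ss"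
  shows "\<exists>L::real. (\<lambda>t. avg_F_SE K \<theta>0 t / real t) \<longlonglongrightarrow> L
                 \<and> (\<lambda>t. F_E K \<xi> \<theta>0 t / real t) \<longlonglongrightarrow> L"
proof -
  define K0 where "K0 = K \<theta>0"
  define K1 where "K1 m = vector_derivative (\<lambda>s. K s m) (at \<theta>0)" for m
  have d: "\<And>m. ((\<lambda>s. K s m) has_vector_derivative K1 m) (at \<theta>0)"
    unfolding K1_def using diff vector_derivative_works by blast
  have kc: "kraus_channel K \<theta>0 = ch K0 K0"
    by (simp add: fun_eq_iff kraus_channel_def ch_def K0_def)
  have dm: "density_matrix \<rho>ss"
    and fixall: "\<And>X. ch K0 K0 X = X \<longleftrightarrow> (\<exists>c. X = cscale c \<rho>ss)"
    and eigs: "\<And>\<mu> X. X \<noteq> 0 \<Longrightarrow> ch K0 K0 X = cscale \<mu> X \<Longrightarrow> \<mu> \<noteq> 1 \<Longrightarrow> cmod \<mu> < 1"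
    using irr unfolding irreducible_channel_def kc by auto
  have herm: "cmat_adj \<rho>ss = \<rho>ss" and tr1: "trace \<rho>ss = 1"
    using dm unfolding density_matrix_def by auto
  have fixp: "ch K0 K0 \<rho>ss = \<rho>ss" using fixall[of \<rho>ss] by (metis cscale_one)
  have tp0: "(\<Sum>m\<in>UNIV. cmat_adj (K0 m) ** K0 m) = mat 1" using tp unfolding K0_def by simp
  have trE: "trace (ch K0 K0 Y) = trace Y" for Y by (simp add: trace_ch tp0)
  have trEn: "trace ((ch K0 K0 ^^ n) Y) = trace Y" for n Y by (induction n) (auto simp: trE)
  define F where "F Y = ch K0 K0 Y - cscale (trace Y) \<rho>ss" for Y
  have rep: "F X $ i $ j = (\<Sum>k\<in>UNIV. \<Sum>l\<in>UNIV. ((\<Sum>m\<in>UNIV. K0 m $ i $ k * cnj (K0 m $ j $ l)) - (if k = l then \<rho>ss $ i $ j else 0)) * X $ k $ l)" for X i j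
    by (simp add: F_def ch_entry cscale_trace_entry left_diff_distrib sum_subtractf)
  have eig: "cmod \<mu> < 1" if X0: "X \<noteq> 0" and FX: "F X = cscale \<mu> X" for \<mu> X
  proof (cases "\<mu> = 0")
    case True
    then show ?thesis by simp
  next
    case False
    have "trace (F X) = 0" by (simp add: F_def trace_sub trace_cscale trE tr1)
    then have "\<mu> * trace X = 0" using FX by (simp add: trace_cscale)
    then have trX: "trace X = 0" using False by simp
    then have EX: "ch K0 K0 X = cscale \<mu> X" using FX by (simp add: F_def)
    show ?thesis
    proof (cases "\<mu> = 1")
      case True
      then have "ch K0 K0 X = X" using EX by simp
      then obtain c where c: "X = cscale c \<rho>ss" using fixall by blast
      then have "trace X = c" by (simp add: trace_cscale tr1)
      then have "X = 0" using c trX by simp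
      then show ?thesis using X0 by simp
    next
      case False
      then show ?thesis using eigs X0 EX by blast
    qed
  qed
  have ex: "\<exists>C s. 0 < s \<and> s < 1 \<and> (\<forall>n X i j. cmod ((F^^n) X $ i $ j) \<le> C * s^n * (\<Sum>k\<in>UNIV. \<Sum>l\<in>UNIV. cmod (X$k$l)))"
    by (rule decay_bridge[OF rep]) (rule eig)
  obtain C' s where s: "0 < s" "s < 1"
    and bnd: "\<And>n X i j. cmod ((F^^n) X $ i $ j) \<le> C' * s^n * (\<Sum>k\<in>UNIV. \<Sum>l\<in>UNIV. cmod (X$k$l))"
    using ex by blast
  have Fpow: "(F^^Suc n) Y = (ch K0 K0 ^^ Suc n) Y - cscale (trace Y) \<rho>ss" for n Y
  proof (induction n)
    case 0
    then show ?case by (simp add: F_def)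
  next
    case (Suc n)
    have "(F^^Suc (Suc n)) Y = F ((ch K0 K0 ^^ Suc n) Y - cscale (trace Y) \<rho>ss)"
      using Suc by simp
    also have "\<dots> = (ch K0 K0 ^^ Suc (Suc n)) Y - cscale (trace Y) \<rho>ss"
      by (simp add: F_def ch_diff ch_cscale fixp trace_sub trace_cscale tr1 trE[of "(ch K0 K0 ^^ n) Y"] trEn)
    finally show ?case .
  qed
  define D where "D = real CARD('n)"
  have D0: "0 \<le> D" unfolding D_def by simp
  define C where "C = D^2 * \<bar>C'\<bar> * D^2 + 1 + D * norm \<rho>ss"
  have decay: "norm ((ch K0 K0 ^^ n) Y - cscale (trace Y) \<rho>ss) \<le> C * s^n * norm Y" for n Y
  proof (cases n)
    case 0
    have "norm ((ch K0 K0 ^^ n) Y - cscale (trace Y) \<rho>ss) \<le> norm Y + cmod (trace Y) * norm \<rho>ss"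
      using 0 norm_triangle_ineq4[of Y "cscale (trace Y) \<rho>ss"] by (simp add: norm_cscale)
    also have "\<dots> \<le> norm Y + D * norm Y * norm \<rho>ss"
      using trace_le_norm[of Y] unfolding D_def by (intro add_left_mono mult_right_mono) auto
    also have "\<dots> \<le> C * s^n * norm Y"
      using 0 D0 unfolding C_def by (simp add: algebra_simps)
    finally show ?thesis .
  next
    case (Suc k)
    have "norm ((ch K0 K0 ^^ n) Y - cscale (trace Y) \<rho>ss) = norm ((F^^n) Y)"
      using Suc Fpow by simp
    also have "\<dots> \<le> (\<Sum>i\<in>UNIV. \<Sum>j\<in>UNIV. cmod ((F^^n) Y $ i $ j))" by (rule norm_cm_le)
    also have "\<dots> \<le> (\<Sum>i\<in>(UNIV::'n set). \<Sum>j\<in>(UNIV::'n set). \<bar>C'\<bar> * s^n * (D^2 * norm Y))"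
    proof (intro sum_mono)
      fix i j
      have "cmod ((F^^n) Y $ i $ j) \<le> C' * s^n * (\<Sum>k\<in>UNIV. \<Sum>l\<in>UNIV. cmod (Y$k$l))" by (rule bnd)
      also have "\<dots> \<le> \<bar>C'\<bar> * s^n * (\<Sum>k\<in>UNIV. \<Sum>l\<in>UNIV. cmod (Y$k$l))"
        using s by (intro mult_right_mono) (auto intro!: sum_nonneg)
      also have "\<dots> \<le> \<bar>C'\<bar> * s^n * (D^2 * norm Y)"
        using s entries_le_norm[of Y] unfolding D_def by (intro mult_left_mono) auto
      finally show "cmod ((F^^n) Y $ i $ j) \<le> \<bar>C'\<bar> * s^n * (D^2 * norm Y)" .
    qed
    also have "\<dots> = D^2 * \<bar>C'\<bar> * D^2 * s^n * norm Y" unfolding D_def by (simp add: power2_eq_square)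
    also have "\<dots> \<le> C * s^n * norm Y"
      unfolding C_def using s D0 by (intro mult_right_mono) auto
    finally show ?thesis .
  qed
  interpret Q: qchan K0 \<rho>ss C s
    using tp0 fixp tr1 herm s decay by unfold_locales auto
  obtain L R0 R1 R2 where H: "\<And>t X. cmat_adj X = X \<Longrightarrow> trace X = 1 \<Longrightarrow>
      \<bar>Q.fq K1 t X - real t * L\<bar> \<le> R0 + R1 * norm X + R2 * (norm X)^2"
    using Q.fq_asym by blast
  have FE: "F_E K \<xi> \<theta>0 t = 4 * Q.fq K1 t \<rho>ss" for t
    unfolding F_E_eq[OF d pur] Q.fq_alt[OF herm] K0_def[symmetric]
    by (simp add: Q.mS_def Q.rS_def Q.Lt_def trace_sum)
  have FSE: "F_SE K \<theta>0 t \<psi> = 4 * Q.fq K1 t (outer \<psi> \<psi>)" for t \<psi>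
    unfolding F_SE_eq[OF d] Q.fq_alt[OF outer_herm] K0_def[symmetric]
    by (simp add: Q.mS_def Q.rS_def Q.Lt_def trace_sum)
  have limE: "(\<lambda>t. F_E K \<xi> \<theta>0 t / real t) \<longlonglongrightarrow> 4 * L"
  proof (rule lin_limit)
    fix t
    have "\<bar>F_E K \<xi> \<theta>0 t - real t * (4 * L)\<bar> = 4 * \<bar>Q.fq K1 t \<rho>ss - real t * L\<bar>"
    proof -
      have eq: "4 * Q.fq K1 t \<rho>ss - real t * (4 * L) = 4 * (Q.fq K1 t \<rho>ss - real t * L)" by (simp add: algebra_simps)
      show ?thesis unfolding FE eq abs_mult by simp
    qed
    also have "\<dots> \<le> 4 * (R0 + R1 * norm \<rho>ss + R2 * (norm \<rho>ss)^2)"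
      using H[OF herm tr1, of t] by (intro mult_left_mono) auto
    finally show "\<bar>F_E K \<xi> \<theta>0 t - real t * (4 * L)\<bar> \<le> 4 * (R0 + R1 * norm \<rho>ss + R2 * (norm \<rho>ss)^2)" .
  qed
  define U where "U = uniform_measure lborel (ball (0::complex^'n) 1)"
  define nrm :: "complex^'n \<Rightarrow> complex^'n" where "nrm x = x /\<^sub>R norm x" for x
  have hs: "(haar_state :: (complex^'n) measure) = distr U borel nrm"
    unfolding haar_state_def U_def nrm_def ..
  have ball_fin: "emeasure lborel (ball (0::complex^'n) 1) \<noteq> \<infinity>"
    using emeasure_lborel_ball_finite[of "0::complex^'n" 1] by simp
  have ball_pos: "emeasure lborel (ball (0::complex^'n) 1) \<noteq> 0"
  proof -
    have "unit_ball_vol (real (CARD('n)) * 2) \<noteq> 0"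
      using unit_ball_vol_pos[of "real (CARD('n)) * 2"] by linarith
    then show ?thesis by (simp add: emeasure_ball)
  qed
  interpret PU: prob_space U
    unfolding U_def by (rule prob_space_uniform_measure[OF ball_pos ball_fin])
  have meas_nrm: "nrm \<in> measurable U borel" unfolding U_def nrm_def by measurable
  have meas_F: "(\<lambda>\<psi>. F_SE K \<theta>0 t \<psi>) \<in> borel_measurable borel" for t
    unfolding FSE by (intro borel_measurable_continuous_onI continuous_intros Q.fq_outer_cont)
  have avg: "avg_F_SE K \<theta>0 t = (\<integral>x. F_SE K \<theta>0 t (nrm x) \<partial>U)" for t
    unfolding avg_F_SE_def hs by (rule integral_distr[OF meas_nrm meas_F])
  have AEunit: "AE x in U. norm (nrm x) = 1"
    unfolding U_def
  proof (rule AE_uniform_measureI)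
    show "ball 0 1 \<in> sets lborel" by simp
    show "AE x in lborel. x \<in> ball 0 1 \<longrightarrow> norm (nrm x) = 1"
      using AE_lborel_singleton[of "0::complex^'n"] by eventually_elim (simp add: nrm_def)
  qed
  define DD where "DD = real CARD('n)^2"
  define RR where "RR = \<bar>R0\<bar> + \<bar>R1\<bar> * DD + \<bar>R2\<bar> * DD^2"
  define W where "W = 4 * (\<bar>L\<bar> + RR)"
  have RR0: "0 \<le> RR" unfolding RR_def DD_def by simp
  have unitb: "\<bar>Q.fq K1 t (outer \<psi> \<psi>) - real t * L\<bar> \<le> RR" if u: "norm \<psi> = 1" for t \<psi>
  proof -
    have tr: "trace (outer \<psi> \<psi>) = 1" using trace_outer[of \<psi>] u by simp
    have nb: "norm (outer \<psi> \<psi>) \<le> DD" using outer_norm_le[OF u] unfolding DD_def .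
    have a1: "R1 * norm (outer \<psi> \<psi>) \<le> \<bar>R1\<bar> * DD"
    proof -
      have "R1 * norm (outer \<psi> \<psi>) \<le> \<bar>R1\<bar> * norm (outer \<psi> \<psi>)" by (intro mult_right_mono) auto
      also have "\<dots> \<le> \<bar>R1\<bar> * DD" using nb by (intro mult_left_mono) auto
      finally show ?thesis .
    qed
    have a2: "R2 * (norm (outer \<psi> \<psi>))^2 \<le> \<bar>R2\<bar> * DD^2"
    proof -
      have "R2 * (norm (outer \<psi> \<psi>))^2 \<le> \<bar>R2\<bar> * (norm (outer \<psi> \<psi>))^2" by (intro mult_right_mono) auto
      also have "\<dots> \<le> \<bar>R2\<bar> * DD^2" using nb by (intro mult_left_mono power_mono) auto
      finally show ?thesis .
    qed
    have "\<bar>Q.fq K1 t (outer \<psi> \<psi>) - real t * L\<bar> \<le> R0 + R1 * norm (outer \<psi> \<psi>) + R2 * (norm (outer \<psi> \<psi>))^2"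
      by (rule H[OF outer_herm tr])
    then show ?thesis using a1 a2 unfolding RR_def by linarith
  qed
  have Feq: "\<bar>F_SE K \<theta>0 t \<psi> - real t * (4 * L)\<bar> = 4 * \<bar>Q.fq K1 t (outer \<psi> \<psi>) - real t * L\<bar>" for t \<psi>
  proof -
    have eq: "4 * Q.fq K1 t (outer \<psi> \<psi>) - real t * (4 * L) = 4 * (Q.fq K1 t (outer \<psi> \<psi>) - real t * L)"
      by (simp add: algebra_simps)
    show ?thesis unfolding FSE eq abs_mult by simp
  qed
  have conv: "AE x in U. (\<lambda>t. F_SE K \<theta>0 t (nrm x) / real t) \<longlonglongrightarrow> 4 * L"
    using AEunit
  proof eventually_elim
    case (elim x)
    show ?case
    proof (rule lin_limit)
      fix t
      show "\<bar>F_SE K \<theta>0 t (nrm x) - real t * (4 * L)\<bar> \<le> 4 * RR"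
        unfolding Feq using unitb[OF elim, of t] by simp
    qed
  qed
  have dom: "AE x in U. norm (F_SE K \<theta>0 t (nrm x) / real t) \<le> W" for t
    using AEunit
  proof eventually_elim
    case (elim x)
    show ?case
    proof (cases "t = 0")
      case True
      then show ?thesis unfolding W_def using RR0 by simp
    next
      case False
      then have t1: "1 \<le> real t" by simp
      have b: "\<bar>F_SE K \<theta>0 t (nrm x) - real t * (4 * L)\<bar> \<le> 4 * RR"
        unfolding Feq using unitb[OF elim, of t] by simp
      have "\<bar>F_SE K \<theta>0 t (nrm x)\<bar> \<le> real t * (4 * \<bar>L\<bar>) + 4 * RR"
      proof -
        have l1: "real t * L \<le> real t * \<bar>L\<bar>" using t1 by (intro mult_left_mono) auto
        have l2: "- (real t * L) \<le> real t * \<bar>L\<bar>" using t1 mult_left_mono[of "- L" "\<bar>L\<bar>" "real t"] by auto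
        show ?thesis using b l1 l2 by (simp add: abs_le_iff)
      qed
      also have "\<dots> \<le> real t * W"
      proof -
        have "4 * RR \<le> real t * (4 * RR)" using mult_right_mono[OF t1, of "4*RR"] RR0 by simp
        then show ?thesis unfolding W_def by (simp add: algebra_simps)
      qed
      finally have "\<bar>F_SE K \<theta>0 t (nrm x)\<bar> \<le> real t * W" .
      then show ?thesis using t1 by (simp add: divide_le_eq mult.commute)
    qed
  qed
  have lim_int: "(\<lambda>t. \<integral>x. F_SE K \<theta>0 t (nrm x) / real t \<partial>U) \<longlonglongrightarrow> (\<integral>x. 4 * L \<partial>U)"
  proof (rule integral_dominated_convergence[where w="\<lambda>_. W"])
    show "(\<lambda>x. 4 * L) \<in> borel_measurable U" by simp
    show "(\<lambda>x. F_SE K \<theta>0 t (nrm x) / real t) \<in> borel_measurable U" for t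
      by (intro borel_measurable_divide measurable_compose[OF meas_nrm meas_F] borel_measurable_const)
    show "integrable U (\<lambda>_. W)" by simp
    show "AE x in U. (\<lambda>t. F_SE K \<theta>0 t (nrm x) / real t) \<longlonglongrightarrow> 4 * L" by (rule conv)
    show "AE x in U. norm (F_SE K \<theta>0 t (nrm x) / real t) \<le> W" for t by (rule dom)
  qed
  have lim_avg: "(\<lambda>t. avg_F_SE K \<theta>0 t / real t) \<longlonglongrightarrow> 4 * L"
    using lim_int by (simp add: avg PU.prob_space)
  show ?thesis using lim_avg limE by blast
qed


end
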